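(* Let $\pi$ be a uniformly random permutation of $\{1,\dots,n\}$ and $\mathbf{s}=\sqrt{12/(n^2-1)}\,\big(\pi(1)-\tfrac{n+1}2,\dots,\pi(n)-\tfrac{n+1}2\big)^\top$, and let $\boldsymbol{\Sigma}=\frac{n}{n-1}\big(\mathbf{I}_n-\frac1n\mathbf{1}_n\mathbf{1}_n^\top\big)$. Then for all non-random symmetric $n\times n$ matrices $\mathbf{A},\mathbf{B}$, $$\mathbb{E}\,\mathbf{s}^\top\mathbf{A}\mathbf{s}=\operatorname{tr}(\boldsymbol{\Sigma}\mathbf{A}),$$ $$\operatorname{cov}(\mathbf{s}^\top\mathbf{A}\mathbf{s},\mathbf{s}^\top\mathbf{B}\mathbf{s})=2\operatorname{tr}(\mathbf{A}\mathbf{B})-\frac65\operatorname{tr}(\mathbf{A}\circ\mathbf{B})-\frac{4}{5n}\operatorname{tr}(\mathbf{A})\operatorname{tr}(\mathbf{B})+O(1)\|\mathbf{A}\|\|\mathbf{B}\|,$$ where $O(1)$ denotes a quantity bounded in absolute value by a constant not depending on $n,\mathbf{A},\mathbf{B}$.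
   Context: $\circ$ denotes the Hadamard (entrywise) product, $\|\cdot\|$ the spectral norm, and $\mathbf{1}_n$ the all-ones vector. *)

theory Defs
  imports "HOL-Probability.Probability"
begin

text \<open>Matrices of size n are represented as functions nat => nat => real,
  only the entries with indices in {1..n} being relevant.\<close>

definition sym_mat :: "nat \<Rightarrow> (nat \<Rightarrow> nat \<Rightarrow> real) \<Rightarrow> bool" where
  "sym_mat n A \<longleftrightarrow> (\<forall>i\<in>{1..n}. \<forall>j\<in>{1..n}. A i j = A j i)"

definition mtrace :: "nat \<Rightarrow> (nat \<Rightarrow> nat \<Rightarrow> real) \<Rightarrow> real" where
  "mtrace n A = (\<Sum>i=1..n. A i i)"

definition mmult :: "nat \<Rightarrow> (nat \<Rightarrow> nat \<Rightarrow> real) \<Rightarrow> (nat \<Rightarrow> nat \<Rightarrow> real) \<Rightarrow> (nat \<Rightarrow> nat \<Rightarrow> real)" where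
  "mmult n A B = (\<lambda>i j. \<Sum>k=1..n. A i k * B k j)"

definition hadamard :: "(nat \<Rightarrow> nat \<Rightarrow> real) \<Rightarrow> (nat \<Rightarrow> nat \<Rightarrow> real) \<Rightarrow> (nat \<Rightarrow> nat \<Rightarrow> real)" where
  "hadamard A B = (\<lambda>i j. A i j * B i j)"

definition spec_norm :: "nat \<Rightarrow> (nat \<Rightarrow> nat \<Rightarrow> real) \<Rightarrow> real" where
  "spec_norm n A = Sup {sqrt (\<Sum>i=1..n. (\<Sum>j=1..n. A i j * x j)\<^sup>2) | x :: nat \<Rightarrow> real.
        (\<Sum>i=1..n. (x i)\<^sup>2) = 1}"

definition Sigma_mat :: "nat \<Rightarrow> (nat \<Rightarrow> nat \<Rightarrow> real)" where
  "Sigma_mat n = (\<lambda>i j. real n / (real n - 1) * ((if i = j then 1 else 0) - 1 / real n))"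

definition svec :: "nat \<Rightarrow> (nat \<Rightarrow> nat) \<Rightarrow> nat \<Rightarrow> real" where
  "svec n p i = sqrt (12 / ((real n)\<^sup>2 - 1)) * (real (p i) - (real n + 1) / 2)"

definition qform :: "nat \<Rightarrow> (nat \<Rightarrow> nat \<Rightarrow> real) \<Rightarrow> (nat \<Rightarrow> real) \<Rightarrow> real" where
  "qform n A x = (\<Sum>i=1..n. \<Sum>j=1..n. x i * A i j * x j)"

definition unif_perm :: "nat \<Rightarrow> (nat \<Rightarrow> nat) pmf" where
  "unif_perm n = pmf_of_set {p. p permutes {1..n}}"

definition perm_cov :: "nat \<Rightarrow> ((nat \<Rightarrow> nat) \<Rightarrow> real) \<Rightarrow> ((nat \<Rightarrow> nat) \<Rightarrow> real) \<Rightarrow> real" where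
  "perm_cov n X Y =
     measure_pmf.expectation (unif_perm n) (\<lambda>p. X p * Y p)
     - measure_pmf.expectation (unif_perm n) X * measure_pmf.expectation (unif_perm n) Y"

end

theory Submission
  imports Defs
begin

lemma psum1: "(\<Sum>m=1..n. (real m + a)) = real n*(real n+1)/2 + real n*a"
  by (induction n) (simp_all add: field_simps)

lemma psum2: "(\<Sum>m=1..n. (real m + a)^2) = real n*(real n+1)*(2*real n+1)/6 + a*real n*(real n+1) + real n*a^2"
proof (induction n)
  case (Suc n) then show ?case by (simp add: field_simps power2_eq_square)
qed simp

lemma psum4: "(\<Sum>m=1..n. (real m + a)^4) = real n*(real n+1)*(2*real n+1)*(3*(real n)^2+3*real n-1)/30
   + 4*a*(real n*(real n+1)/2)^2 + 6*a^2*(real n*(real n+1)*(2*real n+1)/6) + 4*a^3*(real n*(real n+1)/2) + real n*a^4"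
proof (induction n)
  case (Suc n)
  have "(\<Sum>m=1..Suc n. (real m + a)^4) = (\<Sum>m=1..n. (real m + a)^4) + (1 + real n + a)^4" by simp
  also note Suc.IH
  finally show ?case by (simp add: field_simps power2_eq_square power3_eq_cube power4_eq_xxxx)
qed simp

lemma wsum1: "(\<Sum>m=1..n. (real m - (real n + 1)/2)) = 0"
proof -
  have "(\<Sum>m=1..n. (real m - (real n + 1)/2)) = (\<Sum>m=1..n. (real m + (-(real n + 1)/2)))" by (intro sum.cong refl) (simp add: field_simps)
  also have "\<dots> = 0" unfolding psum1 by (simp add: field_simps)
  finally show ?thesis .
qed
lemma wsum2: "(\<Sum>m=1..n. (real m - (real n + 1)/2)^2) = real n*((real n)^2-1)/12"
proof -
  have "(\<Sum>m=1..n. (real m - (real n + 1)/2)^2) = (\<Sum>m=1..n. (real m + (-(real n + 1)/2))^2)" by (intro sum.cong refl) (simp add: field_simps)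
  also have "\<dots> = real n*((real n)^2-1)/12" unfolding psum2 by (simp add: field_simps power2_eq_square)
  finally show ?thesis .
qed
lemma wsum4: "(\<Sum>m=1..n. (real m - (real n + 1)/2)^4) = real n*((real n)^2-1)*(3*(real n)^2-7)/240"
proof -
  have "(\<Sum>m=1..n. (real m - (real n + 1)/2)^4) = (\<Sum>m=1..n. (real m + (-(real n + 1)/2))^4)" by (intro sum.cong refl) (simp add: field_simps)
  also have "\<dots> = real n*((real n)^2-1)*(3*(real n)^2-7)/240" unfolding psum4 by (simp add: field_simps power2_eq_square power3_eq_cube power4_eq_xxxx)
  finally show ?thesis .
qed


definition Sp :: "nat \<Rightarrow> (nat \<Rightarrow> nat) set" where "Sp n = {p. p permutes {1..n}}"
definition w :: "nat \<Rightarrow> nat \<Rightarrow> real" where "w n m = real m - (real n + 1)/2"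
definition FF :: "nat \<Rightarrow> nat \<Rightarrow> nat \<Rightarrow> nat \<Rightarrow> nat \<Rightarrow> real" where
  "FF n i j k l = (\<Sum>p\<in>Sp n. w n (p i) * w n (p j) * w n (p k) * w n (p l))"
definition GG :: "nat \<Rightarrow> nat \<Rightarrow> nat \<Rightarrow> real" where
  "GG n i j = (\<Sum>p\<in>Sp n. w n (p i) * w n (p j))"
definition NN :: "nat \<Rightarrow> real" where "NN n = real (card (Sp n))"
definition pw2 :: "nat \<Rightarrow> real" where "pw2 n = real n*((real n)^2-1)/12"
definition pw4 :: "nat \<Rightarrow> real" where "pw4 n = real n*((real n)^2-1)*(3*(real n)^2-7)/240"

lemma Sp_finite: "finite (Sp n)" unfolding Sp_def by (simp add: finite_permutations)
lemma Sp_ne: "Sp n \<noteq> {}" unfolding Sp_def using permutes_id by blast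
lemma NN_pos: "NN n > 0" unfolding NN_def using Sp_finite Sp_ne by (simp add: card_gt_0_iff)

lemma perm_sum: assumes "p permutes {1..n}" shows "(\<Sum>l=1..n. f (p l)) = (\<Sum>l=1..n. f l)"
  using sum.reindex_bij_betw[OF permutes_imp_bij[OF assms], of f] .

lemma wp1: "p \<in> Sp n \<Longrightarrow> (\<Sum>l=1..n. w n (p l)) = 0"
  unfolding Sp_def using perm_sum[of p n "w n"] wsum1[of n] by (simp add: w_def)
lemma wp2: "p \<in> Sp n \<Longrightarrow> (\<Sum>l=1..n. (w n (p l))^2) = pw2 n"
  unfolding Sp_def using perm_sum[of p n "\<lambda>m. (w n m)^2"] wsum2[of n] by (simp add: w_def pw2_def)
lemma wp4: "p \<in> Sp n \<Longrightarrow> (\<Sum>l=1..n. (w n (p l))^4) = pw4 n"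
  unfolding Sp_def using perm_sum[of p n "\<lambda>m. (w n m)^4"] wsum4[of n] by (simp add: w_def pw4_def)

lemma FF_inv: assumes "s permutes {1..n}" shows "FF n (s i) (s j) (s k) (s l) = FF n i j k l"
  unfolding FF_def Sp_def by (subst (2) sum_permutations_compose_right[OF assms]) simp

lemma GG_inv: assumes "s permutes {1..n}" shows "GG n (s i) (s j) = GG n i j"
  unfolding GG_def Sp_def by (subst (2) sum_permutations_compose_right[OF assms]) simp

lemma FF_sum_l: "(\<Sum>l=1..n. FF n i j k l) = 0"
proof -
  have "(\<Sum>l=1..n. FF n i j k l) = (\<Sum>p\<in>Sp n. w n (p i) * w n (p j) * w n (p k) * (\<Sum>l=1..n. w n (p l)))"
    unfolding FF_def by (subst sum.swap) (simp add: sum_distrib_left)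
  also have "\<dots> = 0" by (simp add: wp1[simplified])
  finally show ?thesis .
qed

lemma GG_sum_l: "(\<Sum>l=1..n. GG n i l) = 0"
proof -
  have "(\<Sum>l=1..n. GG n i l) = (\<Sum>p\<in>Sp n. w n (p i) * (\<Sum>l=1..n. w n (p l)))"
    unfolding GG_def by (subst sum.swap) (simp add: sum_distrib_left)
  also have "\<dots> = 0" by (simp add: wp1[simplified])
  finally show ?thesis .
qed

lemma FF_sum_ll: "(\<Sum>l=1..n. FF n i i l l) = pw2 n * GG n i i"
proof -
  have "(\<Sum>l=1..n. FF n i i l l) = (\<Sum>p\<in>Sp n. w n (p i) * w n (p i) * (\<Sum>l=1..n. (w n (p l))^2))"
    unfolding FF_def by (subst sum.swap) (simp add: sum_distrib_left power2_eq_square mult.assoc)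
  also have "\<dots> = pw2 n * GG n i i" by (simp add: wp2[simplified] GG_def sum_distrib_left mult_ac)
  finally show ?thesis .
qed

lemma FF_sum_diag: "(\<Sum>l=1..n. FF n l l l l) = NN n * pw4 n"
proof -
  have "(\<Sum>l=1..n. FF n l l l l) = (\<Sum>p\<in>Sp n. (\<Sum>l=1..n. (w n (p l))^4))"
    unfolding FF_def by (subst sum.swap) (simp add: power4_eq_xxxx mult.assoc)
  also have "\<dots> = NN n * pw4 n" by (simp add: wp4[simplified] NN_def)
  finally show ?thesis .
qed

lemma GG_sum_diag: "(\<Sum>l=1..n. GG n l l) = NN n * pw2 n"
proof -
  have "(\<Sum>l=1..n. GG n l l) = (\<Sum>p\<in>Sp n. (\<Sum>l=1..n. (w n (p l))^2))"
    unfolding GG_def by (subst sum.swap) (simp add: power2_eq_square)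
  also have "\<dots> = NN n * pw2 n" by (simp add: wp2[simplified] NN_def)
  finally show ?thesis .
qed

lemma const_sum:
  assumes "K \<subseteq> {1..n}" "l0 \<in> {1..n} - K" "\<And>l. l \<in> {1..n} - K \<Longrightarrow> f l = f l0"
  shows "(\<Sum>l=1..n. f l) = (\<Sum>l\<in>K. f l) + real (n - card K) * f l0"
proof -
  have fK: "finite K" using assms(1) finite_subset by blast
  have "(\<Sum>l=1..n. f l) = (\<Sum>l\<in>{1..n} - K. f l) + (\<Sum>l\<in>K. f l)"
    using sum.subset_diff[OF assms(1)] by simp
  also have "(\<Sum>l\<in>{1..n} - K. f l) = (\<Sum>l\<in>{1..n} - K. f l0)" using assms(3) by (rule sum.cong[OF refl])
  also have "\<dots> = real (n - card K) * f l0" using card_Diff_subset[OF fK assms(1)] by simp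
  finally show ?thesis by simp
qed

lemma tr_other: "x \<noteq> a \<Longrightarrow> x \<noteq> b \<Longrightarrow> Transposition.transpose a b x = x" by simp

lemma FF_const4: assumes "l \<in> {1..n}" "l0 \<in> {1..n}" "l \<notin> {i,j,k}" "l0 \<notin> {i,j,k}"
  shows "FF n i j k l = FF n i j k l0"
proof -
  let ?s = "Transposition.transpose l0 l"
  have s: "?s permutes {1..n}" using assms by (simp add: permutes_swap_id)
  have "FF n (?s i) (?s j) (?s k) (?s l0) = FF n i j k l0" by (rule FF_inv[OF s])
  moreover have "?s i = i" "?s j = j" "?s k = k" "?s l0 = l" using assms by auto
  ultimately show ?thesis by simp
qed

lemma FF_sym1: "FF n i j k l = FF n j i k l" unfolding FF_def by (simp add: ac_simps)
lemma FF_sym2: "FF n i j k l = FF n i k j l" unfolding FF_def by (simp add: ac_simps)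
lemma FF_sym3: "FF n i j k l = FF n i j l k" unfolding FF_def by (simp add: ac_simps)
lemma GG_sym: "GG n i j = GG n j i" unfolding GG_def by (simp add: ac_simps)


definition pa :: "nat \<Rightarrow> real" where "pa n = ((real n)^2 - 1) * (3 * (real n)^2 - 7) / 240"
definition pt :: "nat \<Rightarrow> real" where "pt n = - (real n + 1) * (3 * (real n)^2 - 7) / 240"
definition pb :: "nat \<Rightarrow> real" where "pb n = (real n + 1) * (5 * (real n)^3 - 9 * (real n)^2 - 5 * real n + 21) / 720"
definition pc :: "nat \<Rightarrow> real" where "pc n = - (real n + 1) * (real n - 3) * (5 * real n + 7) / 720"
definition pd :: "nat \<Rightarrow> real" where "pd n = (real n + 1) * (5 * real n + 7) / 240"
definition gd :: "nat \<Rightarrow> real" where "gd n = ((real n)^2 - 1) / 12"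
definition go :: "nat \<Rightarrow> real" where "go n = - (real n + 1) / 12"

lemma GG_const: assumes "i \<in> {1..n}" "m \<in> {1..n}" shows "GG n m m = GG n i i"
proof -
  let ?s = "Transposition.transpose i m"
  have s: "?s permutes {1..n}" using assms by (simp add: permutes_swap_id)
  show ?thesis using GG_inv[OF s, of i i] by simp
qed

lemma GG_diag: assumes "i \<in> {1..n}" shows "GG n i i = NN n * gd n"
proof -
  have "(\<Sum>l=1..n. GG n l l) = (\<Sum>l=1..n. GG n i i)" using GG_const[OF assms] by (intro sum.cong) auto
  then have "real n * GG n i i = NN n * pw2 n" using GG_sum_diag[of n] by simp
  moreover have "real n > 0" using assms by auto
  ultimately have "GG n i i = NN n * pw2 n / real n" by (simp add: field_simps)
  also have "\<dots> = NN n * gd n" using \<open>real n > 0\<close> unfolding gd_def pw2_def by (simp add: field_simps)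
  finally show ?thesis .
qed

lemma GG_off: assumes "i \<in> {1..n}" "j \<in> {1..n}" "i \<noteq> j"
  shows "GG n i j = NN n * go n"
proof -
  have c: "GG n i l = GG n i j" if "l \<in> {1..n} - {i}" for l
  proof -
    let ?s = "Transposition.transpose j l"
    have s: "?s permutes {1..n}" using assms that by (simp add: permutes_swap_id)
    show ?thesis using GG_inv[OF s, of i j] assms that by simp
  qed
  have "0 = (\<Sum>l=1..n. GG n i l)" using GG_sum_l by simp
  also have "\<dots> = GG n i i + real (n - 1) * GG n i j"
    using const_sum[of "{i}" n j "GG n i", OF _ _ c] assms by simp
  finally have e: "0 = GG n i i + real (n - 1) * GG n i j" .
  have n2: "n \<ge> 2" using assms by auto
  then have "real (n - 1) = real n - 1" by simp
  with e n2 have "GG n i j = - GG n i i / (real n - 1)" by (simp add: field_simps)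
  also have "\<dots> = NN n * go n" using n2 GG_diag[OF assms(1)] unfolding gd_def go_def
    by (simp add: field_simps power2_eq_square)
  finally show ?thesis .
qed

lemma FF_const_diag: assumes "i \<in> {1..n}" "m \<in> {1..n}" shows "FF n m m m m = FF n i i i i"
proof -
  let ?s = "Transposition.transpose i m"
  have s: "?s permutes {1..n}" using assms by (simp add: permutes_swap_id)
  show ?thesis using FF_inv[OF s, of i i i i] by simp
qed

lemma FF_a: assumes "i \<in> {1..n}" shows "FF n i i i i = NN n * pa n"
proof -
  have "(\<Sum>l=1..n. FF n l l l l) = (\<Sum>l=1..n. FF n i i i i)" using FF_const_diag[OF assms] by (intro sum.cong) auto
  then have "real n * FF n i i i i = NN n * pw4 n" using FF_sum_diag[of n] by simp
  moreover have "real n > 0" using assms by auto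
  ultimately have "FF n i i i i = NN n * pw4 n / real n" by (simp add: field_simps)
  also have "\<dots> = NN n * pa n" using \<open>real n > 0\<close> unfolding pa_def pw4_def by (simp add: field_simps)
  finally show ?thesis .
qed

lemma FF_t: assumes "i \<in> {1..n}" "j \<in> {1..n}" "i \<noteq> j"
  shows "FF n i i i j = NN n * pt n"
proof -
  have c: "FF n i i i l = FF n i i i j" if "l \<in> {1..n} - {i}" for l
    using FF_const4[of l n j i i i] assms that by auto
  have "0 = (\<Sum>l=1..n. FF n i i i l)" using FF_sum_l by simp
  also have "\<dots> = FF n i i i i + real (n - 1) * FF n i i i j"
    using const_sum[of "{i}" n j "FF n i i i", OF _ _ c] assms by simp
  finally have e: "0 = FF n i i i i + real (n - 1) * FF n i i i j" .
  have n2: "n \<ge> 2" using assms by auto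
  then have "real (n - 1) = real n - 1" by simp
  with e n2 have "FF n i i i j = - FF n i i i i / (real n - 1)" by (simp add: field_simps)
  also have "\<dots> = NN n * pt n" using n2 FF_a[OF assms(1)] unfolding pa_def pt_def
    by (simp add: field_simps power2_eq_square)
  finally show ?thesis .
qed

lemma FF_b: assumes "i \<in> {1..n}" "j \<in> {1..n}" "i \<noteq> j"
  shows "FF n i i j j = NN n * pb n"
proof -
  have c: "FF n i i l l = FF n i i j j" if "l \<in> {1..n} - {i}" for l
  proof -
    let ?s = "Transposition.transpose j l"
    have s: "?s permutes {1..n}" using assms that by (simp add: permutes_swap_id)
    show ?thesis using FF_inv[OF s, of i i j j] assms that by simp
  qed
  have "pw2 n * GG n i i = (\<Sum>l=1..n. FF n i i l l)" using FF_sum_ll by simp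
  also have "\<dots> = FF n i i i i + real (n - 1) * FF n i i j j"
    using const_sum[of "{i}" n j "\<lambda>l. FF n i i l l", OF _ _ c] assms by simp
  finally have e: "pw2 n * GG n i i = FF n i i i i + real (n - 1) * FF n i i j j" .
  have n2: "n \<ge> 2" using assms by auto
  then have "real (n - 1) = real n - 1" by simp
  with e n2 have "FF n i i j j = (pw2 n * GG n i i - FF n i i i i) / (real n - 1)" by (simp add: field_simps)
  also have "\<dots> = NN n * pb n" using n2 FF_a[OF assms(1)] GG_diag[OF assms(1)] unfolding pa_def pb_def gd_def pw2_def
    by (simp add: field_simps power2_eq_square power3_eq_cube) algebra
  finally show ?thesis .
qed

lemma card3: assumes "i \<in> {1..(n::nat)}" "j \<in> {1..n}" "k \<in> {1..n}" "i \<noteq> j" "i \<noteq> k" "j \<noteq> k"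
  shows "n \<ge> 3"
proof -
  have "card {i,j,k} \<le> card {1..n}" using assms by (intro card_mono) auto
  then show ?thesis using assms by simp
qed

lemma card4: assumes "i \<in> {1..(n::nat)}" "j \<in> {1..n}" "k \<in> {1..n}" "l \<in> {1..n}" "i \<noteq> j" "i \<noteq> k" "j \<noteq> k"
   "i \<noteq> l" "j \<noteq> l" "k \<noteq> l"
  shows "n \<ge> 4"
proof -
  have "card {i,j,k,l} \<le> card {1..n}" using assms by (intro card_mono) auto
  then show ?thesis using assms by simp
qed

lemma FF_c: assumes "i \<in> {1..n}" "j \<in> {1..n}" "k \<in> {1..n}" "i \<noteq> j" "i \<noteq> k" "j \<noteq> k"
  shows "FF n i i j k = NN n * pc n"
proof -
  have c: "FF n i i j l = FF n i i j k" if "l \<in> {1..n} - {i,j}" for l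
    using FF_const4[of l n k i i j] assms that by auto
  have "0 = (\<Sum>l=1..n. FF n i i j l)" using FF_sum_l by simp
  also have "\<dots> = FF n i i j i + FF n i i j j + real (n - 2) * FF n i i j k"
    using const_sum[of "{i,j}" n k "FF n i i j", OF _ _ c] assms by simp
  also have "FF n i i j i = FF n i i i j" unfolding FF_def by (simp add: ac_simps)
  finally have e: "0 = FF n i i i j + FF n i i j j + real (n - 2) * FF n i i j k" .
  have n3: "n \<ge> 3" using card3[OF assms] .
  then have "real (n - 2) = real n - 2" by simp
  with e n3 have "FF n i i j k = - (FF n i i i j + FF n i i j j) / (real n - 2)" by (simp add: field_simps)
  also have "\<dots> = NN n * pc n" using n3 FF_t[OF assms(1,2,4)] FF_b[OF assms(1,2,4)] unfolding pc_def pt_def pb_def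
    by (simp add: field_simps power2_eq_square power3_eq_cube)
  finally show ?thesis .
qed

lemma FF_d: assumes "i \<in> {1..n}" "j \<in> {1..n}" "k \<in> {1..n}" "l \<in> {1..n}" "i \<noteq> j" "i \<noteq> k" "j \<noteq> k"
   "i \<noteq> l" "j \<noteq> l" "k \<noteq> l"
  shows "FF n i j k l = NN n * pd n"
proof -
  have c: "FF n i j k m = FF n i j k l" if "m \<in> {1..n} - {i,j,k}" for m
    using FF_const4[of m n l i j k] assms that by auto
  have "0 = (\<Sum>m=1..n. FF n i j k m)" using FF_sum_l by simp
  also have "\<dots> = FF n i j k i + FF n i j k j + FF n i j k k + real (n - 3) * FF n i j k l"
    using const_sum[of "{i,j,k}" n l "FF n i j k", OF _ _ c] assms by simp
  also have "FF n i j k i = FF n i i j k" unfolding FF_def by (simp add: ac_simps)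
  also have "FF n i j k j = FF n j j i k" unfolding FF_def by (simp add: ac_simps)
  also have "FF n i j k k = FF n k k i j" unfolding FF_def by (simp add: ac_simps)
  finally have e: "0 = FF n i i j k + FF n j j i k + FF n k k i j + real (n - 3) * FF n i j k l" .
  have n4: "n \<ge> 4" using card4[OF assms] .
  then have "real (n - 3) = real n - 3" by simp
  with e n4 have "FF n i j k l = - (FF n i i j k + FF n j j i k + FF n k k i j) / (real n - 3)" by (simp add: field_simps)
  also have "\<dots> = NN n * pd n" using n4 FF_c[of i n j k] FF_c[of j n i k] FF_c[of k n i j] assms unfolding pc_def pd_def
    by (simp add: field_simps power2_eq_square power3_eq_cube)
  finally show ?thesis .
qed


lemma FFv1: assumes "i \<in> {1..n}" "j \<in> {1..n}" "i \<noteq> j" shows "FF n j i i i = NN n * pt n"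
proof -
  have "FF n j i i i = FF n i i i j" unfolding FF_def by (simp add: ac_simps)
  then show ?thesis using FF_t[of i n j] assms by simp
qed

lemma FFv2: assumes "i \<in> {1..n}" "j \<in> {1..n}" "i \<noteq> j" shows "FF n i j i i = NN n * pt n"
proof -
  have "FF n i j i i = FF n i i i j" unfolding FF_def by (simp add: ac_simps)
  then show ?thesis using FF_t[of i n j] assms by simp
qed

lemma FFv3: assumes "i \<in> {1..n}" "j \<in> {1..n}" "i \<noteq> j" shows "FF n i i j i = NN n * pt n"
proof -
  have "FF n i i j i = FF n i i i j" unfolding FF_def by (simp add: ac_simps)
  then show ?thesis using FF_t[of i n j] assms by simp
qed

lemma FFv4: assumes "i \<in> {1..n}" "j \<in> {1..n}" "i \<noteq> j" shows "FF n i i i j = NN n * pt n"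
proof -
  have "FF n i i i j = FF n i i i j" unfolding FF_def by (simp add: ac_simps)
  then show ?thesis using FF_t[of i n j] assms by simp
qed

lemma FFv5: assumes "i \<in> {1..n}" "j \<in> {1..n}" "i \<noteq> j" shows "FF n i i j j = NN n * pb n"
proof -
  have "FF n i i j j = FF n i i j j" unfolding FF_def by (simp add: ac_simps)
  then show ?thesis using FF_b[of i n j] assms by simp
qed

lemma FFv6: assumes "i \<in> {1..n}" "j \<in> {1..n}" "i \<noteq> j" shows "FF n i j i j = NN n * pb n"
proof -
  have "FF n i j i j = FF n i i j j" unfolding FF_def by (simp add: ac_simps)
  then show ?thesis using FF_b[of i n j] assms by simp
qed

lemma FFv7: assumes "i \<in> {1..n}" "j \<in> {1..n}" "i \<noteq> j" shows "FF n i j j i = NN n * pb n"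
proof -
  have "FF n i j j i = FF n i i j j" unfolding FF_def by (simp add: ac_simps)
  then show ?thesis using FF_b[of i n j] assms by simp
qed

lemma FFv8: assumes "i \<in> {1..n}" "j \<in> {1..n}" "k \<in> {1..n}" "i \<noteq> j" "i \<noteq> k" "j \<noteq> k" shows "FF n i i j k = NN n * pc n"
proof -
  have "FF n i i j k = FF n i i j k" unfolding FF_def by (simp add: ac_simps)
  then show ?thesis using FF_c[of i n j k] assms by simp
qed

lemma FFv9: assumes "i \<in> {1..n}" "j \<in> {1..n}" "k \<in> {1..n}" "i \<noteq> j" "i \<noteq> k" "j \<noteq> k" shows "FF n i j i k = NN n * pc n"
proof -
  have "FF n i j i k = FF n i i j k" unfolding FF_def by (simp add: ac_simps)
  then show ?thesis using FF_c[of i n j k] assms by simp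
qed

lemma FFv10: assumes "i \<in> {1..n}" "j \<in> {1..n}" "k \<in> {1..n}" "i \<noteq> j" "i \<noteq> k" "j \<noteq> k" shows "FF n i j k i = NN n * pc n"
proof -
  have "FF n i j k i = FF n i i j k" unfolding FF_def by (simp add: ac_simps)
  then show ?thesis using FF_c[of i n j k] assms by simp
qed

lemma FFv11: assumes "i \<in> {1..n}" "j \<in> {1..n}" "k \<in> {1..n}" "i \<noteq> j" "i \<noteq> k" "j \<noteq> k" shows "FF n j i i k = NN n * pc n"
proof -
  have "FF n j i i k = FF n i i j k" unfolding FF_def by (simp add: ac_simps)
  then show ?thesis using FF_c[of i n j k] assms by simp
qed

lemma FFv12: assumes "i \<in> {1..n}" "j \<in> {1..n}" "k \<in> {1..n}" "i \<noteq> j" "i \<noteq> k" "j \<noteq> k" shows "FF n j i k i = NN n * pc n"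
proof -
  have "FF n j i k i = FF n i i j k" unfolding FF_def by (simp add: ac_simps)
  then show ?thesis using FF_c[of i n j k] assms by simp
qed

lemma FFv13: assumes "i \<in> {1..n}" "j \<in> {1..n}" "k \<in> {1..n}" "i \<noteq> j" "i \<noteq> k" "j \<noteq> k" shows "FF n j k i i = NN n * pc n"
proof -
  have "FF n j k i i = FF n i i j k" unfolding FF_def by (simp add: ac_simps)
  then show ?thesis using FF_c[of i n j k] assms by simp
qed

lemma FFv14: assumes "i \<in> {1..n}"  shows "FF n i i i i = NN n * pa n"
proof -
  have "FF n i i i i = FF n i i i i" unfolding FF_def by (simp add: ac_simps)
  then show ?thesis using FF_a[of i n] assms by simp
qed

lemma FFv15: assumes "i \<in> {1..n}" "j \<in> {1..n}" "k \<in> {1..n}" "l \<in> {1..n}" "i \<noteq> j" "i \<noteq> k" "i \<noteq> l" "j \<noteq> k" "j \<noteq> l" "k \<noteq> l" shows "FF n i j k l = NN n * pd n"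
proof -
  have "FF n i j k l = FF n i j k l" unfolding FF_def by (simp add: ac_simps)
  then show ?thesis using FF_d[of i n j k l] assms by simp
qed

lemmas FFvars = FFv1 FFv2 FFv3 FFv4 FFv5 FFv6 FFv7 FFv8 FFv9 FFv10 FFv11 FFv12 FFv13 FFv14 FFv15

definition dl :: "nat \<Rightarrow> nat \<Rightarrow> real" where "dl x y = (if x = y then 1 else 0)"
definition pbe :: "nat \<Rightarrow> real" where "pbe n = pb n - 2 * pc n + pd n"
definition pga :: "nat \<Rightarrow> real" where "pga n = pt n - 3 * pc n + 2 * pd n"
definition pep :: "nat \<Rightarrow> real" where "pep n = pa n - 3 * pb n - 4 * pt n + 12 * pc n - 6 * pd n"

lemma FF_rep: assumes "i \<in> {1..n}" "j \<in> {1..n}" "k \<in> {1..n}" "l \<in> {1..n}"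
  shows "FF n i j k l = NN n * (pd n + (pc n - pd n) * (dl i j + dl i k + dl i l + dl j k + dl j l + dl k l)
     + pbe n * (dl i j * dl k l + dl i k * dl j l + dl i l * dl j k)
     + pga n * (dl i j * dl j k + dl i j * dl j l + dl i k * dl k l + dl j k * dl k l)
     + pep n * (dl i j * dl j k * dl k l))"
  using assms
  apply (cases "i=j")
  apply (cases "i=k")
  apply (cases "i=l")
  apply (simp add: dl_def FFvars pbe_def pga_def pep_def)
  apply (simp add: dl_def FFvars pbe_def pga_def pep_def)
  apply (cases "i=l")
  apply (simp add: dl_def FFvars pbe_def pga_def pep_def)
  apply (cases "k=l")
  apply (simp add: dl_def FFvars pbe_def pga_def pep_def)
  apply (simp add: dl_def FFvars pbe_def pga_def pep_def)
  apply (cases "i=k")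
  apply (cases "i=l")
  apply (simp add: dl_def FFvars pbe_def pga_def pep_def)
  apply (cases "j=l")
  apply (simp add: dl_def FFvars pbe_def pga_def pep_def)
  apply (simp add: dl_def FFvars pbe_def pga_def pep_def)
  apply (cases "i=l")
  apply (cases "j=k")
  apply (simp add: dl_def FFvars pbe_def pga_def pep_def)
  apply (simp add: dl_def FFvars pbe_def pga_def pep_def)
  apply (cases "j=k")
  apply (cases "j=l")
  apply (simp add: dl_def FFvars pbe_def pga_def pep_def)
  apply (simp add: dl_def FFvars pbe_def pga_def pep_def)
  apply (cases "j=l")
  apply (simp add: dl_def FFvars pbe_def pga_def pep_def)
  apply (cases "k=l")
  apply (simp add: dl_def FFvars pbe_def pga_def pep_def)
  apply (simp add: dl_def FFvars pbe_def pga_def pep_def)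
  done


definition Qc :: "nat \<Rightarrow> (nat\<Rightarrow>nat\<Rightarrow>real) \<Rightarrow> (nat\<Rightarrow>nat\<Rightarrow>real) \<Rightarrow> (nat\<Rightarrow>nat\<Rightarrow>nat\<Rightarrow>nat\<Rightarrow>real) \<Rightarrow> real" where
 "Qc n A B f = (\<Sum>i=1..n. \<Sum>j=1..n. \<Sum>k=1..n. \<Sum>l=1..n. A i j * B k l * f i j k l)"

lemma Qc_add: "Qc n A B (\<lambda>i j k l. f i j k l + g i j k l) = Qc n A B f + Qc n A B g"
  unfolding Qc_def by (simp add: distrib_left sum.distrib)
lemma Qc_scale: "Qc n A B (\<lambda>i j k l. c * f i j k l) = c * Qc n A B f"
  unfolding Qc_def by (simp add: sum_distrib_left mult_ac)
lemma Qc_const: "Qc n A B (\<lambda>i j k l. c) = c * Qc n A B (\<lambda>i j k l. 1)"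
  using Qc_scale[of n A B c "\<lambda>i j k l. 1"] by simp
lemma Qc_cong: "(\<And>i j k l. i \<in> {1..n} \<Longrightarrow> j \<in> {1..n} \<Longrightarrow> k \<in> {1..n} \<Longrightarrow> l \<in> {1..n} \<Longrightarrow> f i j k l = g i j k l)
   \<Longrightarrow> Qc n A B f = Qc n A B g"
  unfolding Qc_def by (intro sum.cong refl) auto

lemma Qc_symB: assumes "sym_mat n B" shows "Qc n A B f = Qc n A B (\<lambda>i j k l. f i j l k)"
proof -
  have inner: "(\<Sum>k=1..n. \<Sum>l=1..n. A i j * B k l * f i j k l) = (\<Sum>k=1..n. \<Sum>l=1..n. A i j * B k l * f i j l k)" for i j
  proof -
    have "(\<Sum>k=1..n. \<Sum>l=1..n. A i j * B k l * f i j k l) = (\<Sum>l=1..n. \<Sum>k=1..n. A i j * B k l * f i j k l)"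
      by (rule sum.swap)
    also have "\<dots> = (\<Sum>k=1..n. \<Sum>l=1..n. A i j * B k l * f i j l k)"
      using assms unfolding sym_mat_def by (intro sum.cong refl) auto
    finally show ?thesis .
  qed
  show ?thesis unfolding Qc_def by (simp only: inner)
qed

lemma Qc_symA: assumes "sym_mat n A" shows "Qc n A B f = Qc n A B (\<lambda>i j k l. f j i k l)"
proof -
  have "Qc n A B f = (\<Sum>j=1..n. \<Sum>i=1..n. \<Sum>k=1..n. \<Sum>l=1..n. A i j * B k l * f i j k l)"
    unfolding Qc_def by (rule sum.swap)
  also have "\<dots> = Qc n A B (\<lambda>i j k l. f j i k l)"
    unfolding Qc_def using assms unfolding sym_mat_def by (intro sum.cong refl) auto
  finally show ?thesis .
qed

lemma Qc_swap: "Qc n A B f = Qc n B A (\<lambda>i j k l. f k l i j)"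
proof -
  have inner1: "(\<Sum>j=1..n. \<Sum>k=1..n. g j k) = (\<Sum>k=1..n. \<Sum>j=1..n. g j k)" for g :: "nat \<Rightarrow> nat \<Rightarrow> real"
    by (rule sum.swap)
  have "Qc n A B f = (\<Sum>i=1..n. \<Sum>k=1..n. \<Sum>j=1..n. \<Sum>l=1..n. A i j * B k l * f i j k l)"
    unfolding Qc_def by (subst inner1) (rule refl)
  also have "\<dots> = (\<Sum>k=1..n. \<Sum>i=1..n. \<Sum>j=1..n. \<Sum>l=1..n. A i j * B k l * f i j k l)"
    by (rule sum.swap)
  also have "\<dots> = (\<Sum>k=1..n. \<Sum>i=1..n. \<Sum>l=1..n. \<Sum>j=1..n. A i j * B k l * f i j k l)"
    by (simp only: inner1[of "\<lambda>j l. A _ j * B _ l * f _ j _ l"])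
  also have "\<dots> = (\<Sum>k=1..n. \<Sum>l=1..n. \<Sum>i=1..n. \<Sum>j=1..n. A i j * B k l * f i j k l)"
    by (simp only: inner1[of "\<lambda>i l. \<Sum>j=1..n. A i j * B _ l * f i j _ l"])
  also have "\<dots> = Qc n B A (\<lambda>i j k l. f k l i j)"
    unfolding Qc_def by (simp add: mult_ac)
  finally show ?thesis .
qed

definition osum :: "nat \<Rightarrow> (nat\<Rightarrow>nat\<Rightarrow>real) \<Rightarrow> real" where "osum n A = (\<Sum>i=1..n. \<Sum>j=1..n. A i j)"
definition Uf :: "nat \<Rightarrow> (nat\<Rightarrow>nat\<Rightarrow>real) \<Rightarrow> (nat\<Rightarrow>nat\<Rightarrow>real) \<Rightarrow> real" where
  "Uf n A B = (\<Sum>i=1..n. (\<Sum>j=1..n. A i j) * (\<Sum>l=1..n. B i l))"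
definition T5f :: "nat \<Rightarrow> (nat\<Rightarrow>nat\<Rightarrow>real) \<Rightarrow> (nat\<Rightarrow>nat\<Rightarrow>real) \<Rightarrow> real" where
  "T5f n A B = (\<Sum>i=1..n. \<Sum>j=1..n. A i j * B i j)"
definition T6f :: "nat \<Rightarrow> (nat\<Rightarrow>nat\<Rightarrow>real) \<Rightarrow> (nat\<Rightarrow>nat\<Rightarrow>real) \<Rightarrow> real" where
  "T6f n A B = (\<Sum>i=1..n. A i i * (\<Sum>l=1..n. B i l))"
definition T7f :: "nat \<Rightarrow> (nat\<Rightarrow>nat\<Rightarrow>real) \<Rightarrow> (nat\<Rightarrow>nat\<Rightarrow>real) \<Rightarrow> real" where
  "T7f n A B = (\<Sum>i=1..n. A i i * B i i)"

lemma times_if1: "x * (if P then 1 else 0) = (if P then x else (0::real))" by simp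
lemma sum_if_const: "(\<Sum>x\<in>S. if P then f x else 0) = (if P then sum f S else 0)" by simp
lemma dl_mult: "dl a b * dl c d = (if a = b \<and> c = d then 1 else 0)" by (simp add: dl_def)
lemma dl_mult3: "dl a b * dl c d * dl e f = (if a = b \<and> c = d \<and> e = f then 1 else 0)" by (simp add: dl_def)

lemma times_if0: "x * (if P then y else 0) = (if P then x * y else (0::real))" by simp
lemmas Qsimps = Qc_def dl_def times_if0 sum_if_const sum.delta sum.delta'

lemma P4: "(\<Sum>i\<in>I. \<Sum>j\<in>J. a i j) * (\<Sum>k\<in>K. \<Sum>l\<in>L. b k l) = (\<Sum>i\<in>I. \<Sum>j\<in>J. \<Sum>k\<in>K. \<Sum>l\<in>L. a i j * (b k l::real))"
  by (simp add: sum_distrib_right) (simp add: sum_distrib_left)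
lemma P3a: "(\<Sum>i\<in>I. a i) * (\<Sum>k\<in>K. \<Sum>l\<in>L. b k l) = (\<Sum>i\<in>I. \<Sum>k\<in>K. \<Sum>l\<in>L. a i * (b k l::real))"
  by (simp add: sum_distrib_right) (simp add: sum_distrib_left)
lemma P3b: "(\<Sum>i\<in>I. \<Sum>j\<in>J. a i j) * (\<Sum>k\<in>K. b k) = (\<Sum>i\<in>I. \<Sum>j\<in>J. \<Sum>k\<in>K. a i j * (b k::real))"
  by (simp add: sum_distrib_right) (simp add: sum_distrib_left)
lemma P2: "(\<Sum>i\<in>I. a i) * (\<Sum>k\<in>K. b k) = (\<Sum>i\<in>I. \<Sum>k\<in>K. a i * (b k::real))"
  by (rule sum_product)

lemma Q0: "Qc n A B (\<lambda>i j k l. 1) = osum n A * osum n B"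
  unfolding Qc_def osum_def by (simp add: P4)

lemma Qc_c: "Qc n A B (\<lambda>i j k l. c) = c * (osum n A * osum n B)"
  using Qc_scale[of n A B c "\<lambda>i j k l. 1"] Q0 by simp

lemma Qij: "Qc n A B (\<lambda>i j k l. dl i j) = mtrace n A * osum n B"
  unfolding mtrace_def osum_def by (simp add: Qsimps P4 P3a P3b P2)

lemma Qkl: "Qc n A B (\<lambda>i j k l. dl k l) = osum n A * mtrace n B"
  unfolding mtrace_def osum_def by (simp add: Qsimps P4 P3a P3b P2)

lemma Qik: "Qc n A B (\<lambda>i j k l. dl i k) = Uf n A B"
  unfolding Uf_def by (simp add: Qsimps P4 P3a P3b P2)

lemma Qijkl: "Qc n A B (\<lambda>i j k l. dl i j * dl k l) = mtrace n A * mtrace n B"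
  unfolding mtrace_def by (simp add: Qsimps P4 P3a P3b P2)

lemma Qikjl: "Qc n A B (\<lambda>i j k l. dl i k * dl j l) = T5f n A B"
  unfolding T5f_def by (simp add: Qsimps)

lemma Qijk: "Qc n A B (\<lambda>i j k l. dl i j * dl j k) = T6f n A B"
  unfolding T6f_def by (simp add: Qsimps sum_distrib_left)

lemma Q4: "Qc n A B (\<lambda>i j k l. dl i j * dl j k * dl k l) = T7f n A B"
  unfolding T7f_def by (simp add: Qsimps)

lemma dl_sym: "dl a b = dl b a" by (auto simp: dl_def)

context fixes n A B assumes sA: "sym_mat n A" and sB: "sym_mat n B"
begin

lemma Qil: "Qc n A B (\<lambda>i j k l. dl i l) = Uf n A B"
  using Qc_symB[OF sB, of A "\<lambda>i j k l. dl i l"] Qik by simp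
lemma Qjk: "Qc n A B (\<lambda>i j k l. dl j k) = Uf n A B"
  using Qc_symA[OF sA, of B "\<lambda>i j k l. dl j k"] Qik by simp
lemma Qjl: "Qc n A B (\<lambda>i j k l. dl j l) = Uf n A B"
  using Qc_symA[OF sA, of B "\<lambda>i j k l. dl j l"] Qil by simp
lemma Qiljk: "Qc n A B (\<lambda>i j k l. dl i l * dl j k) = T5f n A B"
  using Qc_symB[OF sB, of A "\<lambda>i j k l. dl i l * dl j k"] Qikjl by simp
lemma Qijl: "Qc n A B (\<lambda>i j k l. dl i j * dl j l) = T6f n A B"
  using Qc_symB[OF sB, of A "\<lambda>i j k l. dl i j * dl j l"] Qijk by simp
lemma Qikl: "Qc n A B (\<lambda>i j k l. dl i k * dl k l) = T6f n B A"
proof -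
  have "Qc n A B (\<lambda>i j k l. dl i k * dl k l) = Qc n B A (\<lambda>i j k l. dl k i * dl i j)"
    by (rule Qc_swap)
  also have "\<dots> = Qc n B A (\<lambda>i j k l. dl i j * dl j k)"
    by (rule Qc_cong) (auto simp: dl_def)
  finally show ?thesis using Qijk by simp
qed
lemma Qjkl: "Qc n A B (\<lambda>i j k l. dl j k * dl k l) = T6f n B A"
  using Qc_symA[OF sA, of B "\<lambda>i j k l. dl j k * dl k l"] Qikl by simp

lemma Qc_FF: "Qc n A B (FF n) = NN n * (pd n * osum n A * osum n B
   + (pc n - pd n) * (mtrace n A * osum n B + osum n A * mtrace n B + 4 * Uf n A B)
   + pbe n * (mtrace n A * mtrace n B + 2 * T5f n A B)
   + pga n * (2 * T6f n A B + 2 * T6f n B A) + pep n * T7f n A B)"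
proof -
  have "Qc n A B (FF n) = Qc n A B (\<lambda>i j k l. NN n * (pd n + (pc n - pd n) * (dl i j + dl i k + dl i l + dl j k + dl j l + dl k l)
     + pbe n * (dl i j * dl k l + dl i k * dl j l + dl i l * dl j k)
     + pga n * (dl i j * dl j k + dl i j * dl j l + dl i k * dl k l + dl j k * dl k l)
     + pep n * (dl i j * dl j k * dl k l)))"
    by (rule Qc_cong) (rule FF_rep)
  also have "\<dots> = NN n * (pd n * (osum n A * osum n B)
   + (pc n - pd n) * (mtrace n A * osum n B + Uf n A B + Uf n A B + Uf n A B + Uf n A B + osum n A * mtrace n B)
   + pbe n * (mtrace n A * mtrace n B + T5f n A B + T5f n A B)
   + pga n * (T6f n A B + T6f n A B + T6f n B A + T6f n B A) + pep n * T7f n A B)"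
    by (simp only: Qc_add Qc_scale Qc_c Qij Qkl Qik Qil Qjk Qjl Qijkl Qikjl Qiljk Qijk Qijl Qikl Qjkl Q4)
  also have "\<dots> = NN n * (pd n * osum n A * osum n B
   + (pc n - pd n) * (mtrace n A * osum n B + osum n A * mtrace n B + 4 * Uf n A B)
   + pbe n * (mtrace n A * mtrace n B + 2 * T5f n A B)
   + pga n * (2 * T6f n A B + 2 * T6f n B A) + pep n * T7f n A B)"
    by (simp add: algebra_simps)
  finally show ?thesis .
qed

end


definition rr :: "nat \<Rightarrow> real" where "rr n = 12 / ((real n)^2 - 1)"

lemma unif_exp: "measure_pmf.expectation (unif_perm n) f = (\<Sum>p\<in>Sp n. f p) / NN n"
proof -
  have "unif_perm n = pmf_of_set (Sp n)" unfolding unif_perm_def Sp_def by simp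
  then show ?thesis using integral_pmf_of_set[OF Sp_ne Sp_finite] unfolding NN_def by simp
qed

lemma qform_eq: assumes "n \<ge> 2"
  shows "qform n A (svec n p) = rr n * (\<Sum>i=1..n. \<Sum>j=1..n. A i j * (w n (p i) * w n (p j)))"
proof -
  define s where "s = sqrt (12 / ((real n)^2 - 1))"
  have pos: "12 / ((real n)^2 - 1) \<ge> 0" using assms
    by (simp add: power2_eq_square) (smt (verit, best) mult_le_cancel_left1 of_nat_le_iff numeral_le_real_of_nat_iff one_le_numeral)
  have ss: "s * s = rr n" unfolding s_def rr_def using pos by simp
  have pw: "(s * a) * M * (s * b) = (s * s) * (M * (a * b))" for a b M :: real by (simp add: mult_ac)
  have "qform n A (svec n p) = (\<Sum>i=1..n. \<Sum>j=1..n. (s * w n (p i)) * A i j * (s * w n (p j)))"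
    unfolding qform_def svec_def s_def w_def by simp
  also have "\<dots> = (\<Sum>i=1..n. \<Sum>j=1..n. (s * s) * (A i j * (w n (p i) * w n (p j))))" by (simp only: pw)
  also have "\<dots> = rr n * (\<Sum>i=1..n. \<Sum>j=1..n. A i j * (w n (p i) * w n (p j)))"
    by (simp only: ss sum_distrib_left)
  finally show ?thesis .
qed

lemma sumA: assumes "n \<ge> 2"
  shows "(\<Sum>p\<in>Sp n. qform n A (svec n p)) = rr n * (\<Sum>i=1..n. \<Sum>j=1..n. A i j * GG n i j)"
proof -
  have "(\<Sum>p\<in>Sp n. qform n A (svec n p)) = rr n * (\<Sum>p\<in>Sp n. \<Sum>i=1..n. \<Sum>j=1..n. A i j * (w n (p i) * w n (p j)))"
    by (simp add: qform_eq[OF assms] sum_distrib_left)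
  also have "(\<Sum>p\<in>Sp n. \<Sum>i=1..n. \<Sum>j=1..n. A i j * (w n (p i) * w n (p j))) = (\<Sum>i=1..n. \<Sum>j=1..n. \<Sum>p\<in>Sp n. A i j * (w n (p i) * w n (p j)))"
    by (simp only: sum.swap[where A="Sp n"])
  also have "\<dots> = (\<Sum>i=1..n. \<Sum>j=1..n. A i j * GG n i j)"
    unfolding GG_def by (simp add: sum_distrib_left)
  finally show ?thesis .
qed

lemma sumAB: assumes "n \<ge> 2"
  shows "(\<Sum>p\<in>Sp n. qform n A (svec n p) * qform n B (svec n p)) = (rr n)^2 * Qc n A B (FF n)"
proof -
  have rr2: "(r * X) * (r * Y) = r^2 * (X * Y)" for r X Y :: real by (simp add: power2_eq_square mult_ac)
  have "(\<Sum>p\<in>Sp n. qform n A (svec n p) * qform n B (svec n p)) = (\<Sum>p\<in>Sp n. (rr n)^2 * (\<Sum>i=1..n. \<Sum>j=1..n. \<Sum>k=1..n. \<Sum>l=1..n.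
      (A i j * (w n (p i) * w n (p j))) * (B k l * (w n (p k) * w n (p l)))))"
    by (simp only: qform_eq[OF assms] rr2 P4)
  also have "\<dots> = (rr n)^2 * (\<Sum>p\<in>Sp n. \<Sum>i=1..n. \<Sum>j=1..n. \<Sum>k=1..n. \<Sum>l=1..n.
      (A i j * (w n (p i) * w n (p j))) * (B k l * (w n (p k) * w n (p l))))"
    by (simp only: sum_distrib_left)
  also have "(\<Sum>p\<in>Sp n. \<Sum>i=1..n. \<Sum>j=1..n. \<Sum>k=1..n. \<Sum>l=1..n.
      (A i j * (w n (p i) * w n (p j))) * (B k l * (w n (p k) * w n (p l))))
    = (\<Sum>i=1..n. \<Sum>j=1..n. \<Sum>k=1..n. \<Sum>l=1..n. \<Sum>p\<in>Sp n.
      (A i j * (w n (p i) * w n (p j))) * (B k l * (w n (p k) * w n (p l))))"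
    by (simp only: sum.swap[where A="Sp n"])
  also have "\<dots> = Qc n A B (FF n)"
    unfolding Qc_def FF_def by (simp add: sum_distrib_left mult_ac)
  finally show ?thesis .
qed

lemma GG_rep: assumes "i \<in> {1..n}" "j \<in> {1..n}"
  shows "GG n i j = NN n * (go n + (gd n - go n) * dl i j)"
  using GG_diag[OF assms(1)] GG_off[OF assms] by (cases "i = j") (auto simp: dl_def)

lemma sumGG: "(\<Sum>i=1..n. \<Sum>j=1..n. A i j * GG n i j) = NN n * (go n * osum n A + (gd n - go n) * mtrace n A)"
proof -
  have "(\<Sum>i=1..n. \<Sum>j=1..n. A i j * GG n i j) = (\<Sum>i=1..n. \<Sum>j=1..n. (NN n * go n) * A i j + (NN n * (gd n - go n)) * (A i j * dl i j))"
    by (intro sum.cong refl) (simp add: GG_rep algebra_simps)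
  also have "\<dots> = (NN n * go n) * (\<Sum>i=1..n. \<Sum>j=1..n. A i j) + (NN n * (gd n - go n)) * (\<Sum>i=1..n. \<Sum>j=1..n. A i j * dl i j)"
    by (simp only: sum.distrib sum_distrib_left)
  also have "(\<Sum>i=1..n. \<Sum>j=1..n. A i j * dl i j) = mtrace n A"
    unfolding mtrace_def dl_def by (simp add: times_if1 sum.delta)
  finally show ?thesis unfolding osum_def by (simp add: algebra_simps)
qed

lemma EA: assumes "n \<ge> 2"
  shows "measure_pmf.expectation (unif_perm n) (\<lambda>p. qform n A (svec n p)) = (real n * mtrace n A - osum n A) / (real n - 1)"
proof -
  have "2 * 2 \<le> real n * real n" by (rule mult_mono) (use assms in auto)
  then have h: "real n - 1 \<noteq> 0" "real n + 1 \<noteq> 0" "(real n)^2 - 1 \<noteq> 0" using assms by (auto simp: power2_eq_square)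
  have "measure_pmf.expectation (unif_perm n) (\<lambda>p. qform n A (svec n p)) = rr n * (go n * osum n A + (gd n - go n) * mtrace n A)"
    unfolding unif_exp sumA[OF assms] sumGG using NN_pos[of n] by simp
  also have "\<dots> = (real n * mtrace n A - osum n A) / (real n - 1)"
    using h unfolding rr_def go_def gd_def by (simp add: field_simps power2_eq_square)
  finally show ?thesis .
qed

lemma Sigma_tr: assumes "n \<ge> 2"
  shows "mtrace n (mmult n (Sigma_mat n) A) = (real n * mtrace n A - osum n A) / (real n - 1)"
proof -
  have h: "real n - 1 \<noteq> 0" "real n \<noteq> 0" using assms by auto
  have h3: "1 + real n * real n \<noteq> real n * 2"
  proof
    assume "1 + real n * real n = real n * 2"
    then have "(real n - 1) * (real n - 1) = 0" by (simp add: algebra_simps)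
    with h show False by simp
  qed
  have S: "Sigma_mat n i k = (real n / (real n - 1)) * dl i k - 1 / (real n - 1)" for i k
    unfolding Sigma_mat_def dl_def using h h3 by (cases "i = k") (simp_all add: field_simps)
  have "mtrace n (mmult n (Sigma_mat n) A) = (\<Sum>i=1..n. \<Sum>k=1..n. (real n / (real n - 1)) * (dl i k * A k i) - (1 / (real n - 1)) * A k i)"
    unfolding mtrace_def mmult_def S by (simp add: algebra_simps)
  also have "\<dots> = (real n / (real n - 1)) * (\<Sum>i=1..n. \<Sum>k=1..n. dl i k * A k i) - (1 / (real n - 1)) * (\<Sum>i=1..n. \<Sum>k=1..n. A k i)"
    by (simp only: sum_subtractf sum_distrib_left)
  also have "(\<Sum>i=1..n. \<Sum>k=1..n. dl i k * A k i) = mtrace n A"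
    unfolding mtrace_def dl_def by (simp add: if_distrib[of "\<lambda>x. x * _"] sum.delta cong: if_cong)
  also have "(\<Sum>i=1..n. \<Sum>k=1..n. A k i) = osum n A" unfolding osum_def by (rule sum.swap)
  finally show ?thesis by (simp add: diff_divide_distrib)
qed


lemma nz: assumes "n \<ge> 2"
  shows "real n \<noteq> 0" "real n - 1 \<noteq> 0" "real n + 1 \<noteq> 0" "(real n)^2 - 1 \<noteq> 0" "real n * real n - 1 \<noteq> 0"
proof -
  have "2 * 2 \<le> real n * real n" by (rule mult_mono) (use assms in auto)
  then show "real n \<noteq> 0" "real n - 1 \<noteq> 0" "real n + 1 \<noteq> 0" "(real n)^2 - 1 \<noteq> 0" "real n * real n - 1 \<noteq> 0"
    using assms by (auto simp: power2_eq_square)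
qed

lemma posf: assumes "n \<ge> 2"
  shows "real n > 0" "real n - 1 > 0" "real n + 1 > 0" "(real n)^2 - 1 > 0"
proof -
  have "2 * 2 \<le> real n * real n" by (rule mult_mono) (use assms in auto)
  then show "real n > 0" "real n - 1 > 0" "real n + 1 > 0" "(real n)^2 - 1 > 0"
    using assms by (auto simp: power2_eq_square)
qed

lemma bound_gen: assumes "D > 0" "t \<ge> 0" "N * t \<le> K * D" "- (K * D) \<le> N * t"
  shows "\<bar>N / D\<bar> * t \<le> (K::real)"
proof -
  have "\<bar>N / D\<bar> * t = \<bar>N * t\<bar> / D" using assms(1,2) by (simp add: abs_mult abs_divide)
  also have "\<bar>N * t\<bar> \<le> K * D" using assms(3,4) by (simp add: abs_le_iff)
  then have "\<bar>N * t\<bar> / D \<le> K" using assms(1) by (simp add: divide_le_eq)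
  finally show ?thesis .
qed

definition kap1 :: "nat \<Rightarrow> real" where "kap1 n = (rr n)^2 * pd n - 1 / (real n - 1)^2"
definition kap2 :: "nat \<Rightarrow> real" where "kap2 n = (rr n)^2 * (pc n - pd n) + real n / (real n - 1)^2"
definition kap3 :: "nat \<Rightarrow> real" where "kap3 n = 4 * (rr n)^2 * (pc n - pd n)"
definition kap4 :: "nat \<Rightarrow> real" where "kap4 n = (rr n)^2 * pbe n - (real n)^2 / (real n - 1)^2 + 4 / (5 * real n)"
definition kap5 :: "nat \<Rightarrow> real" where "kap5 n = 2 * (rr n)^2 * pbe n - 2"
definition kap6 :: "nat \<Rightarrow> real" where "kap6 n = 2 * (rr n)^2 * pga n"
definition kap7 :: "nat \<Rightarrow> real" where "kap7 n = (rr n)^2 * pep n + 6 / 5"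

lemma kap1_alg: assumes "a \<noteq> (0::real)" "c \<noteq> 0" "x \<noteq> 0" "x = a + 1" "c = a + 2"
  shows "(12 / (a * c))^2 * (c * (5 * x + 7) / 240) - 1 / a^2 = (16 + 10*x) / (5 * (a^2 * c))"
  using assms(1,2,3) apply (simp add: field_simps)
  using assms(4,5) by (algebra | simp add: algebra_simps power2_eq_square)

lemma kap1_cf: assumes "n \<ge> 2" shows "kap1 n = (16 + 10*(real n)) / (5 * ((real n - 1)^2 * (real n + 1)))"
proof -
  have e2: "(real n)^2 - 1 = (real n - 1) * (real n + 1)" by algebra
  show ?thesis unfolding kap1_def rr_def pd_def pc_def pb_def pt_def pa_def pbe_def pga_def pep_def e2
    by (rule kap1_alg) (use nz[OF assms] in auto)
qed

lemma kap1_up: assumes "x \<ge> (2::real)" shows "(16 + 10*x) * x^2 \<le> 40 * (5 * ((x - 1)^2 * (x + 1)))"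
proof -
  have "40 * (5 * ((x - 1)^2 * (x + 1))) - (16 + 10*x) * x^2 = (456 + 1216*(x-2) + 924*(x-2)^2 + 190*(x-2)^3)" by algebra
  moreover have "0 \<le> (456 + 1216*(x-2) + 924*(x-2)^2 + 190*(x-2)^3)" using assms by (intro add_nonneg_nonneg mult_nonneg_nonneg zero_le_power) auto
  ultimately show ?thesis by linarith
qed

lemma kap1_lo: assumes "x \<ge> (2::real)" shows "- (40 * (5 * ((x - 1)^2 * (x + 1)))) \<le> (16 + 10*x) * x^2"
proof -
  have "40 * (5 * ((x - 1)^2 * (x + 1))) + (16 + 10*x) * x^2 = (744 + 1584*(x-2) + 1076*(x-2)^2 + 210*(x-2)^3)" by algebra
  moreover have "0 \<le> (744 + 1584*(x-2) + 1076*(x-2)^2 + 210*(x-2)^3)" using assms by (intro add_nonneg_nonneg mult_nonneg_nonneg zero_le_power) auto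
  ultimately show ?thesis by linarith
qed

lemma kap1_bd: assumes "n \<ge> 2" shows "\<bar>kap1 n\<bar> * (real n)^2 \<le> 40"
proof -
  have x: "real n \<ge> 2" using assms by simp
  have D: "5 * ((real n - 1)^2 * (real n + 1)) > 0" using posf[OF assms] by (simp add: zero_less_mult_iff)
  show ?thesis unfolding kap1_cf[OF assms]
    by (rule bound_gen[OF D _ kap1_up[OF x] kap1_lo[OF x]]) simp
qed

lemma kap2_alg: assumes "a \<noteq> (0::real)" "c \<noteq> 0" "x \<noteq> 0" "x = a + 1" "c = a + 2"
  shows "(12 / (a * c))^2 * ((- c * (x - 3) * (5 * x + 7) / 720) - (c * (5 * x + 7) / 240)) + x / a^2 = (-2*x) / (5 * (a^2 * c))"
  using assms(1,2,3) apply (simp add: field_simps)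
  using assms(4,5) by (algebra | simp add: algebra_simps power2_eq_square)

lemma kap2_cf: assumes "n \<ge> 2" shows "kap2 n = (-2*(real n)) / (5 * ((real n - 1)^2 * (real n + 1)))"
proof -
  have e2: "(real n)^2 - 1 = (real n - 1) * (real n + 1)" by algebra
  show ?thesis unfolding kap2_def rr_def pd_def pc_def pb_def pt_def pa_def pbe_def pga_def pep_def e2
    by (rule kap2_alg) (use nz[OF assms] in auto)
qed

lemma kap2_up: assumes "x \<ge> (2::real)" shows "(-2*x) * x^2 \<le> 40 * (5 * ((x - 1)^2 * (x + 1)))"
proof -
  have "40 * (5 * ((x - 1)^2 * (x + 1))) - (-2*x) * x^2 = (616 + 1424*(x-2) + 1012*(x-2)^2 + 202*(x-2)^3)" by algebra
  moreover have "0 \<le> (616 + 1424*(x-2) + 1012*(x-2)^2 + 202*(x-2)^3)" using assms by (intro add_nonneg_nonneg mult_nonneg_nonneg zero_le_power) auto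
  ultimately show ?thesis by linarith
qed

lemma kap2_lo: assumes "x \<ge> (2::real)" shows "- (40 * (5 * ((x - 1)^2 * (x + 1)))) \<le> (-2*x) * x^2"
proof -
  have "40 * (5 * ((x - 1)^2 * (x + 1))) + (-2*x) * x^2 = (584 + 1376*(x-2) + 988*(x-2)^2 + 198*(x-2)^3)" by algebra
  moreover have "0 \<le> (584 + 1376*(x-2) + 988*(x-2)^2 + 198*(x-2)^3)" using assms by (intro add_nonneg_nonneg mult_nonneg_nonneg zero_le_power) auto
  ultimately show ?thesis by linarith
qed

lemma kap2_bd: assumes "n \<ge> 2" shows "\<bar>kap2 n\<bar> * (real n)^2 \<le> 40"
proof -
  have x: "real n \<ge> 2" using assms by simp
  have D: "5 * ((real n - 1)^2 * (real n + 1)) > 0" using posf[OF assms] by (simp add: zero_less_mult_iff)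
  show ?thesis unfolding kap2_cf[OF assms]
    by (rule bound_gen[OF D _ kap2_up[OF x] kap2_lo[OF x]]) simp
qed

lemma kap3_alg: assumes "a \<noteq> (0::real)" "c \<noteq> 0" "x \<noteq> 0" "x = a + 1" "c = a + 2"
  shows "4 * (12 / (a * c))^2 * ((- c * (x - 3) * (5 * x + 7) / 720) - (c * (5 * x + 7) / 240)) = (-28*x - 20*x^2) / (5 * (a^2 * c))"
  using assms(1,2,3) apply (simp add: field_simps)
  using assms(4,5) by (algebra | simp add: algebra_simps power2_eq_square)

lemma kap3_cf: assumes "n \<ge> 2" shows "kap3 n = (-28*(real n) - 20*(real n)^2) / (5 * ((real n - 1)^2 * (real n + 1)))"
proof -
  have e2: "(real n)^2 - 1 = (real n - 1) * (real n + 1)" by algebra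
  show ?thesis unfolding kap3_def rr_def pd_def pc_def pb_def pt_def pa_def pbe_def pga_def pep_def e2
    by (rule kap3_alg) (use nz[OF assms] in auto)
qed

lemma kap3_up: assumes "x \<ge> (2::real)" shows "(-28*x - 20*x^2) * x^1 \<le> 40 * (5 * ((x - 1)^2 * (x + 1)))"
proof -
  have "40 * (5 * ((x - 1)^2 * (x + 1))) - (-28*x - 20*x^2) * x^1 = (872 + 1752*(x-2) + 1148*(x-2)^2 + 220*(x-2)^3)" by algebra
  moreover have "0 \<le> (872 + 1752*(x-2) + 1148*(x-2)^2 + 220*(x-2)^3)" using assms by (intro add_nonneg_nonneg mult_nonneg_nonneg zero_le_power) auto
  ultimately show ?thesis by linarith
qed

lemma kap3_lo: assumes "x \<ge> (2::real)" shows "- (40 * (5 * ((x - 1)^2 * (x + 1)))) \<le> (-28*x - 20*x^2) * x^1"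
proof -
  have "40 * (5 * ((x - 1)^2 * (x + 1))) + (-28*x - 20*x^2) * x^1 = (328 + 1048*(x-2) + 852*(x-2)^2 + 180*(x-2)^3)" by algebra
  moreover have "0 \<le> (328 + 1048*(x-2) + 852*(x-2)^2 + 180*(x-2)^3)" using assms by (intro add_nonneg_nonneg mult_nonneg_nonneg zero_le_power) auto
  ultimately show ?thesis by linarith
qed

lemma kap3_bd: assumes "n \<ge> 2" shows "\<bar>kap3 n\<bar> * (real n)^1 \<le> 40"
proof -
  have x: "real n \<ge> 2" using assms by simp
  have D: "5 * ((real n - 1)^2 * (real n + 1)) > 0" using posf[OF assms] by (simp add: zero_less_mult_iff)
  show ?thesis unfolding kap3_cf[OF assms]
    by (rule bound_gen[OF D _ kap3_up[OF x] kap3_lo[OF x]]) simp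
qed

lemma kap4_alg: assumes "a \<noteq> (0::real)" "c \<noteq> 0" "x \<noteq> 0" "x = a + 1" "c = a + 2"
  shows "(12 / (a * c))^2 * ((c * (5 * x ^ 3 - 9 * x^2 - 5 * x + 21) / 720) - 2 * (- c * (x - 3) * (5 * x + 7) / 720) + (c * (5 * x + 7) / 240)) - x^2 / a^2 + 4 / (5 * x) = (4 - 4*x - 10*x^2) / (5 * (x * a^2 * c))"
  using assms(1,2,3) apply (simp add: field_simps)
  using assms(4,5) by (algebra | simp add: algebra_simps power2_eq_square)

lemma kap4_cf: assumes "n \<ge> 2" shows "kap4 n = (4 - 4*(real n) - 10*(real n)^2) / (5 * ((real n) * (real n - 1)^2 * (real n + 1)))"
proof -
  have e2: "(real n)^2 - 1 = (real n - 1) * (real n + 1)" by algebra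
  show ?thesis unfolding kap4_def rr_def pd_def pc_def pb_def pt_def pa_def pbe_def pga_def pep_def e2
    by (rule kap4_alg) (use nz[OF assms] in auto)
qed

lemma kap4_up: assumes "x \<ge> (2::real)" shows "(4 - 4*x - 10*x^2) * x^2 \<le> 40 * (5 * (x * (x - 1)^2 * (x + 1)))"
proof -
  have "40 * (5 * (x * (x - 1)^2 * (x + 1))) - (4 - 4*x - 10*x^2) * x^2 = (1376 + 3752*(x-2) + 3660*(x-2)^2 + 1484*(x-2)^3 + 210*(x-2)^4)" by algebra
  moreover have "0 \<le> (1376 + 3752*(x-2) + 3660*(x-2)^2 + 1484*(x-2)^3 + 210*(x-2)^4)" using assms by (intro add_nonneg_nonneg mult_nonneg_nonneg zero_le_power) auto
  ultimately show ?thesis by linarith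
qed

lemma kap4_lo: assumes "x \<ge> (2::real)" shows "- (40 * (5 * (x * (x - 1)^2 * (x + 1)))) \<le> (4 - 4*x - 10*x^2) * x^2"
proof -
  have "40 * (5 * (x * (x - 1)^2 * (x + 1))) + (4 - 4*x - 10*x^2) * x^2 = (1024 + 3048*(x-2) + 3140*(x-2)^2 + 1316*(x-2)^3 + 190*(x-2)^4)" by algebra
  moreover have "0 \<le> (1024 + 3048*(x-2) + 3140*(x-2)^2 + 1316*(x-2)^3 + 190*(x-2)^4)" using assms by (intro add_nonneg_nonneg mult_nonneg_nonneg zero_le_power) auto
  ultimately show ?thesis by linarith
qed

lemma kap4_bd: assumes "n \<ge> 2" shows "\<bar>kap4 n\<bar> * (real n)^2 \<le> 40"
proof -
  have x: "real n \<ge> 2" using assms by simp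
  have D: "5 * ((real n) * (real n - 1)^2 * (real n + 1)) > 0" using posf[OF assms] by (simp add: zero_less_mult_iff)
  show ?thesis unfolding kap4_cf[OF assms]
    by (rule bound_gen[OF D _ kap4_up[OF x] kap4_lo[OF x]]) simp
qed

lemma kap5_alg: assumes "a \<noteq> (0::real)" "c \<noteq> 0" "x \<noteq> 0" "x = a + 1" "c = a + 2"
  shows "2 * (12 / (a * c))^2 * ((c * (5 * x ^ 3 - 9 * x^2 - 5 * x + 21) / 720) - 2 * (- c * (x - 3) * (5 * x + 7) / 720) + (c * (5 * x + 7) / 240)) - 2 = (10 + 12*x) / (5 * (a * c))"
  using assms(1,2,3) apply (simp add: field_simps)
  using assms(4,5) by (algebra | simp add: algebra_simps power2_eq_square)

lemma kap5_cf: assumes "n \<ge> 2" shows "kap5 n = (10 + 12*(real n)) / (5 * ((real n - 1) * (real n + 1)))"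
proof -
  have e2: "(real n)^2 - 1 = (real n - 1) * (real n + 1)" by algebra
  show ?thesis unfolding kap5_def rr_def pd_def pc_def pb_def pt_def pa_def pbe_def pga_def pep_def e2
    by (rule kap5_alg) (use nz[OF assms] in auto)
qed

lemma kap5_up: assumes "x \<ge> (2::real)" shows "(10 + 12*x) * x^1 \<le> 40 * (5 * ((x - 1) * (x + 1)))"
proof -
  have "40 * (5 * ((x - 1) * (x + 1))) - (10 + 12*x) * x^1 = (532 + 742*(x-2) + 188*(x-2)^2)" by algebra
  moreover have "0 \<le> (532 + 742*(x-2) + 188*(x-2)^2)" using assms by (intro add_nonneg_nonneg mult_nonneg_nonneg zero_le_power) auto
  ultimately show ?thesis by linarith
qed

lemma kap5_lo: assumes "x \<ge> (2::real)" shows "- (40 * (5 * ((x - 1) * (x + 1)))) \<le> (10 + 12*x) * x^1"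
proof -
  have "40 * (5 * ((x - 1) * (x + 1))) + (10 + 12*x) * x^1 = (668 + 858*(x-2) + 212*(x-2)^2)" by algebra
  moreover have "0 \<le> (668 + 858*(x-2) + 212*(x-2)^2)" using assms by (intro add_nonneg_nonneg mult_nonneg_nonneg zero_le_power) auto
  ultimately show ?thesis by linarith
qed

lemma kap5_bd: assumes "n \<ge> 2" shows "\<bar>kap5 n\<bar> * (real n)^1 \<le> 40"
proof -
  have x: "real n \<ge> 2" using assms by simp
  have D: "5 * ((real n - 1) * (real n + 1)) > 0" using posf[OF assms] by (simp add: zero_less_mult_iff)
  show ?thesis unfolding kap5_cf[OF assms]
    by (rule bound_gen[OF D _ kap5_up[OF x] kap5_lo[OF x]]) simp
qed

lemma kap6_alg: assumes "a \<noteq> (0::real)" "c \<noteq> 0" "x \<noteq> 0" "x = a + 1" "c = a + 2"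
  shows "2 * (12 / (a * c))^2 * ((- c * (3 * x^2 - 7) / 240) - 3 * (- c * (x - 3) * (5 * x + 7) / 720) + 2 * (c * (5 * x + 7) / 240)) = (12*x) / (5 * a^2)"
  using assms(1,2,3) apply (simp add: field_simps)
  using assms(4,5) by (algebra | simp add: algebra_simps power2_eq_square)

lemma kap6_cf: assumes "n \<ge> 2" shows "kap6 n = (12*(real n)) / (5 * (real n - 1)^2)"
proof -
  have e2: "(real n)^2 - 1 = (real n - 1) * (real n + 1)" by algebra
  show ?thesis unfolding kap6_def rr_def pd_def pc_def pb_def pt_def pa_def pbe_def pga_def pep_def e2
    by (rule kap6_alg) (use nz[OF assms] in auto)
qed

lemma kap6_up: assumes "x \<ge> (2::real)" shows "(12*x) * x^1 \<le> 40 * (5 * (x - 1)^2)"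
proof -
  have "40 * (5 * (x - 1)^2) - (12*x) * x^1 = (152 + 352*(x-2) + 188*(x-2)^2)" by algebra
  moreover have "0 \<le> (152 + 352*(x-2) + 188*(x-2)^2)" using assms by (intro add_nonneg_nonneg mult_nonneg_nonneg zero_le_power) auto
  ultimately show ?thesis by linarith
qed

lemma kap6_lo: assumes "x \<ge> (2::real)" shows "- (40 * (5 * (x - 1)^2)) \<le> (12*x) * x^1"
proof -
  have "40 * (5 * (x - 1)^2) + (12*x) * x^1 = (248 + 448*(x-2) + 212*(x-2)^2)" by algebra
  moreover have "0 \<le> (248 + 448*(x-2) + 212*(x-2)^2)" using assms by (intro add_nonneg_nonneg mult_nonneg_nonneg zero_le_power) auto
  ultimately show ?thesis by linarith
qed

lemma kap6_bd: assumes "n \<ge> 2" shows "\<bar>kap6 n\<bar> * (real n)^1 \<le> 40"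
proof -
  have x: "real n \<ge> 2" using assms by simp
  have D: "5 * (real n - 1)^2 > 0" using posf[OF assms] by (simp add: zero_less_mult_iff)
  show ?thesis unfolding kap6_cf[OF assms]
    by (rule bound_gen[OF D _ kap6_up[OF x] kap6_lo[OF x]]) simp
qed

lemma kap7_alg: assumes "a \<noteq> (0::real)" "c \<noteq> 0" "x \<noteq> 0" "x = a + 1" "c = a + 2"
  shows "(12 / (a * c))^2 * ((a * c * (3 * x^2 - 7) / 240) - 3 * (c * (5 * x ^ 3 - 9 * x^2 - 5 * x + 21) / 720) - 4 * (- c * (3 * x^2 - 7) / 240) + 12 * (- c * (x - 3) * (5 * x + 7) / 720) - 6 * (c * (5 * x + 7) / 240)) + 6 / 5 = (6 - 12*x) / (5 * a^2)"
  using assms(1,2,3) apply (simp add: field_simps)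
  using assms(4,5) by (algebra | simp add: algebra_simps power2_eq_square)

lemma kap7_cf: assumes "n \<ge> 2" shows "kap7 n = (6 - 12*(real n)) / (5 * (real n - 1)^2)"
proof -
  have e2: "(real n)^2 - 1 = (real n - 1) * (real n + 1)" by algebra
  show ?thesis unfolding kap7_def rr_def pd_def pc_def pb_def pt_def pa_def pbe_def pga_def pep_def e2
    by (rule kap7_alg) (use nz[OF assms] in auto)
qed

lemma kap7_up: assumes "x \<ge> (2::real)" shows "(6 - 12*x) * x^1 \<le> 40 * (5 * (x - 1)^2)"
proof -
  have "40 * (5 * (x - 1)^2) - (6 - 12*x) * x^1 = (236 + 442*(x-2) + 212*(x-2)^2)" by algebra
  moreover have "0 \<le> (236 + 442*(x-2) + 212*(x-2)^2)" using assms by (intro add_nonneg_nonneg mult_nonneg_nonneg zero_le_power) auto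
  ultimately show ?thesis by linarith
qed

lemma kap7_lo: assumes "x \<ge> (2::real)" shows "- (40 * (5 * (x - 1)^2)) \<le> (6 - 12*x) * x^1"
proof -
  have "40 * (5 * (x - 1)^2) + (6 - 12*x) * x^1 = (164 + 358*(x-2) + 188*(x-2)^2)" by algebra
  moreover have "0 \<le> (164 + 358*(x-2) + 188*(x-2)^2)" using assms by (intro add_nonneg_nonneg mult_nonneg_nonneg zero_le_power) auto
  ultimately show ?thesis by linarith
qed

lemma kap7_bd: assumes "n \<ge> 2" shows "\<bar>kap7 n\<bar> * (real n)^1 \<le> 40"
proof -
  have x: "real n \<ge> 2" using assms by simp
  have D: "5 * (real n - 1)^2 > 0" using posf[OF assms] by (simp add: zero_less_mult_iff)
  show ?thesis unfolding kap7_cf[OF assms]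
    by (rule bound_gen[OF D _ kap7_up[OF x] kap7_lo[OF x]]) simp
qed


definition vn :: "nat \<Rightarrow> (nat \<Rightarrow> real) \<Rightarrow> real" where "vn n x = sqrt (\<Sum>i=1..n. (x i)^2)"
definition mv :: "nat \<Rightarrow> (nat \<Rightarrow> nat \<Rightarrow> real) \<Rightarrow> (nat \<Rightarrow> real) \<Rightarrow> nat \<Rightarrow> real" where
  "mv n A x = (\<lambda>i. \<Sum>j=1..n. A i j * x j)"

lemma vn_nonneg: "vn n x \<ge> 0" unfolding vn_def by (simp add: sum_nonneg)

lemma CS: "\<bar>\<Sum>i=1..n. u i * v i\<bar> \<le> vn n u * vn n v"
proof -
  have "(\<Sum>i=1..n. u i * v i)^2 \<le> (\<Sum>i=1..n. (u i)^2) * (\<Sum>i=1..n. (v i)^2)"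
    by (rule Cauchy_Schwarz_ineq_sum)
  then have "sqrt ((\<Sum>i=1..n. u i * v i)^2) \<le> sqrt ((\<Sum>i=1..n. (u i)^2) * (\<Sum>i=1..n. (v i)^2))"
    by (rule real_sqrt_le_mono)
  then show ?thesis unfolding vn_def by (simp add: real_sqrt_mult)
qed

definition SNset :: "nat \<Rightarrow> (nat \<Rightarrow> nat \<Rightarrow> real) \<Rightarrow> real set" where
  "SNset n A = {sqrt (\<Sum>i=1..n. (\<Sum>j=1..n. A i j * x j)\<^sup>2) | x :: nat \<Rightarrow> real. (\<Sum>i=1..n. (x i)\<^sup>2) = 1}"

lemma SN_def2: "spec_norm n A = Sup (SNset n A)" unfolding spec_norm_def SNset_def by simp

lemma row_bd: fixes A :: "nat \<Rightarrow> nat \<Rightarrow> real" assumes "(\<Sum>j=1..n. (x j)^2) = 1"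
  shows "(\<Sum>j=1..n. A i j * x j)^2 \<le> (\<Sum>j=1..n. (A i j)^2)"
  using Cauchy_Schwarz_ineq_sum[of "A i" x "{1..n}"] assms by simp

lemma SN_bdd: "bdd_above (SNset n A)"
proof (rule bdd_aboveI)
  fix y assume "y \<in> SNset n A"
  then obtain x where x: "(\<Sum>i=1..n. (x i)\<^sup>2) = 1" and y: "y = sqrt (\<Sum>i=1..n. (\<Sum>j=1..n. A i j * x j)\<^sup>2)"
    unfolding SNset_def by blast
  have "(\<Sum>i=1..n. (\<Sum>j=1..n. A i j * x j)\<^sup>2) \<le> (\<Sum>i=1..n. \<Sum>j=1..n. (A i j)^2)"
    by (rule sum_mono) (rule row_bd[OF x])
  then show "y \<le> sqrt (\<Sum>i=1..n. \<Sum>j=1..n. (A i j)^2)" unfolding y by (rule real_sqrt_le_mono)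
qed

lemma SN_upper: assumes "(\<Sum>i=1..n. (x i)\<^sup>2) = 1" shows "vn n (mv n A x) \<le> spec_norm n A"
proof -
  have "vn n (mv n A x) \<in> SNset n A" unfolding SNset_def vn_def mv_def using assms by blast
  then show ?thesis unfolding SN_def2 by (rule cSup_upper[OF _ SN_bdd])
qed

definition ev :: "nat \<Rightarrow> nat \<Rightarrow> real" where "ev k = (\<lambda>m. if m = k then 1 else 0)"

lemma ev_sq: "k \<in> {1..n} \<Longrightarrow> (\<Sum>i=1..n. (ev k i)\<^sup>2) = 1"
  unfolding ev_def by (simp add: if_distrib[of "\<lambda>x. x^2"] sum.delta' cong: if_cong)

lemma SN_nonneg: assumes "n \<ge> 1" shows "spec_norm n A \<ge> 0"
proof -
  have "vn n (mv n A (ev 1)) \<le> spec_norm n A" by (rule SN_upper) (rule ev_sq, use assms in simp)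
  then show ?thesis using vn_nonneg[of n "mv n A (ev 1)"] by linarith
qed

lemma vn_zero: assumes "vn n x = 0" "i \<in> {1..n}" shows "x i = 0"
proof -
  have "(\<Sum>i=1..n. (x i)^2) = 0" using assms(1) unfolding vn_def by simp
  then have "\<forall>i\<in>{1..n}. (x i)^2 = 0" by (subst sum_nonneg_eq_0_iff[symmetric]) auto
  then show ?thesis using assms(2) by simp
qed

lemma SN_gen: assumes "n \<ge> 1" shows "vn n (mv n A x) \<le> spec_norm n A * vn n x"
proof (cases "vn n x = 0")
  case True
  then have "mv n A x i = 0" if "i \<in> {1..n}" for i unfolding mv_def using vn_zero[OF True] by simp
  then have "vn n (mv n A x) = 0" unfolding vn_def by simp
  then show ?thesis using True by simp
next
  case False
  define s where "s = vn n x"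
  have s: "s > 0" using False vn_nonneg[of n x] unfolding s_def by linarith
  have ss: "s^2 = (\<Sum>i=1..n. (x i)^2)" unfolding s_def vn_def by (simp add: sum_nonneg)
  define y where "y = (\<lambda>i. x i / s)"
  have "(\<Sum>i=1..n. (y i)\<^sup>2) = (\<Sum>i=1..n. (x i)^2) / s^2" unfolding y_def
    by (simp add: power_divide sum_divide_distrib)
  also have "(\<Sum>i=1..n. (x i)^2) / s^2 = 1" unfolding ss[symmetric] using s by simp
  finally have y1: "(\<Sum>i=1..n. (y i)\<^sup>2) = 1" .
  have "mv n A y = (\<lambda>i. mv n A x i / s)" unfolding mv_def y_def by (simp add: sum_divide_distrib)
  then have "vn n (mv n A y) = vn n (mv n A x) / s" unfolding vn_def using s
    by (simp add: power_divide sum_divide_distrib[symmetric] real_sqrt_divide)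
  with SN_upper[OF y1, of A] have "vn n (mv n A x) / s \<le> spec_norm n A" by simp
  then show ?thesis using s unfolding s_def by (simp add: divide_le_eq mult.commute)
qed

lemma bil: assumes "n \<ge> 1" shows "\<bar>\<Sum>i=1..n. u i * (\<Sum>j=1..n. A i j * x j)\<bar> \<le> vn n u * (spec_norm n A * vn n x)"
proof -
  have "\<bar>\<Sum>i=1..n. u i * mv n A x i\<bar> \<le> vn n u * vn n (mv n A x)" by (rule CS)
  also have "\<dots> \<le> vn n u * (spec_norm n A * vn n x)"
    by (rule mult_left_mono[OF SN_gen[OF assms] vn_nonneg])
  finally show ?thesis unfolding mv_def .
qed

lemma entry_bd: assumes "n \<ge> 1" "i \<in> {1..n}" "j \<in> {1..n}" shows "\<bar>A i j\<bar> \<le> spec_norm n A"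
proof -
  have v: "vn n (ev i) = 1" "vn n (ev j) = 1" unfolding vn_def using ev_sq assms by auto
  have "(\<Sum>k=1..n. ev i k * (\<Sum>l=1..n. A k l * ev j l)) = A i j"
    unfolding ev_def using assms by (simp add: if_distrib[of "\<lambda>x. x * _"] if_distrib[of "\<lambda>x. _ * x"] sum.delta' sum.delta cong: if_cong)
  then show ?thesis using bil[OF assms(1), of "ev i" A "ev j"] v by simp
qed

lemma col_bd: assumes "n \<ge> 1" "j \<in> {1..n}" shows "vn n (\<lambda>i. A i j) \<le> spec_norm n A"
proof -
  have "mv n A (ev j) = (\<lambda>i. A i j)"
    unfolding mv_def ev_def using assms by (simp add: if_distrib[of "\<lambda>x. _ * x"] sum.delta' cong: if_cong)
  then show ?thesis using SN_gen[OF assms(1), of A "ev j"] ev_sq[OF assms(2)] unfolding vn_def by simp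
qed

lemma vn_one: "vn n (\<lambda>i. 1) = sqrt (real n)" unfolding vn_def by simp

lemma rowsum_bd: assumes "n \<ge> 1" shows "vn n (\<lambda>i. \<Sum>j=1..n. A i j) \<le> spec_norm n A * sqrt (real n)"
  using SN_gen[OF assms, of A "\<lambda>i. 1"] unfolding mv_def vn_one by simp

lemma diag_bd: assumes "n \<ge> 1" shows "vn n (\<lambda>i. A i i) \<le> sqrt (real n) * spec_norm n A"
proof -
  have "(\<Sum>i=1..n. (A i i)^2) \<le> (\<Sum>i=1..(n::nat). (spec_norm n A)^2)"
  proof (rule sum_mono)
    fix i assume i: "i \<in> {1..n}"
    have "\<bar>A i i\<bar> \<le> spec_norm n A" by (rule entry_bd[OF assms i i])
    then show "(A i i)^2 \<le> (spec_norm n A)^2" using power_mono[OF _ abs_ge_zero, of "A i i" _ 2] by simp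
  qed
  then have "vn n (\<lambda>i. A i i) \<le> sqrt (real n * (spec_norm n A)^2)" unfolding vn_def by (simp add: real_sqrt_le_mono)
  also have "\<dots> = sqrt (real n) * spec_norm n A" using SN_nonneg[OF assms] by (simp add: real_sqrt_mult)
  finally show ?thesis .
qed


lemma cov_alg0: fixes R pd pc pbe pga pep x a :: real
  assumes "a \<noteq> 0" "x \<noteq> 0" "x = a + 1"
  shows "R * (pd * oA * oB + (pc - pd) * (tA * oB + oA * tB + 4 * U) + pbe * (tA * tB + 2 * T5) + pga * (2 * T6 + 2 * T6') + pep * T7)
     - ((x * tA - oA) / a) * ((x * tB - oB) / a) - (2 * T5 - 6/5 * T7 - 4 / (5 * x) * tA * tB)
   = (R * pd - 1 / a^2) * (oA * oB) + (R * (pc - pd) + x / a^2) * (tA * oB + oA * tB) + (4 * R * (pc - pd)) * U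
     + (R * pbe - x^2 / a^2 + 4 / (5 * x)) * (tA * tB) + (2 * R * pbe - 2) * T5 + (2 * R * pga) * (T6 + T6')
     + (R * pep + 6 / 5) * T7"
proof -
  have e: "((x * tA - oA) / a) * ((x * tB - oB) / a) = (x^2/a^2)*(tA * tB) - (x/a^2)*(tA * oB + oA * tB) + (1/a^2)*(oA * oB)"
    using assms(1) by (simp add: field_simps power2_eq_square)
  show ?thesis unfolding e by (simp add: algebra_simps)
qed

lemma cov_alg: assumes "n \<ge> 2"
  shows "(rr n)^2 * (pd n * oA * oB + (pc n - pd n) * (tA * oB + oA * tB + 4 * U) + pbe n * (tA * tB + 2 * T5) + pga n * (2 * T6 + 2 * T6') + pep n * T7)
     - ((real n * tA - oA) / (real n - 1)) * ((real n * tB - oB) / (real n - 1)) - (2 * T5 - 6/5 * T7 - 4 / (5 * real n) * tA * tB)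
   = kap1 n * (oA * oB) + kap2 n * (tA * oB + oA * tB) + kap3 n * U + kap4 n * (tA * tB) + kap5 n * T5 + kap6 n * (T6 + T6') + kap7 n * T7"
  unfolding kap1_def kap2_def kap3_def kap4_def kap5_def kap6_def kap7_def
  by (rule cov_alg0) (use nz[OF assms] in auto)


context fixes n :: nat and A B :: "nat \<Rightarrow> nat \<Rightarrow> real" assumes n1: "n \<ge> 1"
begin

lemma tr_bd: "\<bar>mtrace n A\<bar> \<le> real n * spec_norm n A"
proof -
  have "\<bar>mtrace n A\<bar> \<le> (\<Sum>i=1..n. \<bar>A i i\<bar>)" unfolding mtrace_def by (rule sum_abs)
  also have "\<dots> \<le> (\<Sum>i=1..n. spec_norm n A)" by (rule sum_mono) (rule entry_bd[OF n1], auto)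
  finally show ?thesis by simp
qed

lemma os_bd: "\<bar>osum n A\<bar> \<le> real n * spec_norm n A"
proof -
  have "\<bar>\<Sum>i=1..n. 1 * (\<Sum>j=1..n. A i j * 1)\<bar> \<le> vn n (\<lambda>i. 1) * (spec_norm n A * vn n (\<lambda>i. 1))"
    by (rule bil[OF n1])
  then show ?thesis unfolding osum_def vn_one by (simp add: mult_ac)
qed

lemma U_bd: "\<bar>Uf n A B\<bar> \<le> real n * (spec_norm n A * spec_norm n B)"
proof -
  have "\<bar>Uf n A B\<bar> \<le> vn n (\<lambda>i. \<Sum>j=1..n. A i j) * vn n (\<lambda>i. \<Sum>j=1..n. B i j)" unfolding Uf_def by (rule CS)
  also have "\<dots> \<le> (spec_norm n A * sqrt (real n)) * (spec_norm n B * sqrt (real n))"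
    by (rule mult_mono[OF rowsum_bd[OF n1] rowsum_bd[OF n1]]) (auto simp: vn_nonneg SN_nonneg[OF n1])
  finally show ?thesis by (simp add: mult_ac)
qed

lemma T5_bd: "\<bar>T5f n A B\<bar> \<le> real n * (spec_norm n A * spec_norm n B)"
proof -
  have "T5f n A B = (\<Sum>j=1..n. \<Sum>i=1..n. A i j * B i j)" unfolding T5f_def by (rule sum.swap)
  also have "\<bar>\<dots>\<bar> \<le> (\<Sum>j=1..n. \<bar>\<Sum>i=1..n. A i j * B i j\<bar>)" by (rule sum_abs)
  also have "\<dots> \<le> (\<Sum>j=1..n. spec_norm n A * spec_norm n B)"
  proof (rule sum_mono)
    fix j assume j: "j \<in> {1..n}"
    have "\<bar>\<Sum>i=1..n. A i j * B i j\<bar> \<le> vn n (\<lambda>i. A i j) * vn n (\<lambda>i. B i j)" by (rule CS)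
    also have "\<dots> \<le> spec_norm n A * spec_norm n B"
      by (rule mult_mono[OF col_bd[OF n1 j] col_bd[OF n1 j]]) (auto simp: vn_nonneg SN_nonneg[OF n1])
    finally show "\<bar>\<Sum>i=1..n. A i j * B i j\<bar> \<le> spec_norm n A * spec_norm n B" .
  qed
  finally show ?thesis by simp
qed

lemma T6_bd: "\<bar>T6f n A B\<bar> \<le> real n * (spec_norm n A * spec_norm n B)"
proof -
  have "\<bar>T6f n A B\<bar> \<le> vn n (\<lambda>i. A i i) * vn n (\<lambda>i. \<Sum>j=1..n. B i j)" unfolding T6f_def by (rule CS)
  also have "\<dots> \<le> (sqrt (real n) * spec_norm n A) * (spec_norm n B * sqrt (real n))"
    by (rule mult_mono[OF diag_bd[OF n1] rowsum_bd[OF n1]]) (auto simp: vn_nonneg SN_nonneg[OF n1])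
  finally show ?thesis by (simp add: mult_ac)
qed

lemma T7_bd: "\<bar>T7f n A B\<bar> \<le> real n * (spec_norm n A * spec_norm n B)"
proof -
  have "\<bar>T7f n A B\<bar> \<le> (\<Sum>i=1..n. \<bar>A i i * B i i\<bar>)" unfolding T7f_def by (rule sum_abs)
  also have "\<dots> \<le> (\<Sum>i=1..n. spec_norm n A * spec_norm n B)"
  proof (rule sum_mono)
    fix i assume i: "i \<in> {1..n}"
    show "\<bar>A i i * B i i\<bar> \<le> spec_norm n A * spec_norm n B" unfolding abs_mult
      by (rule mult_mono[OF entry_bd[OF n1 i i] entry_bd[OF n1 i i]]) (auto simp: SN_nonneg[OF n1])
  qed
  finally show ?thesis by simp
qed

end

lemma comb: assumes "\<bar>k\<bar> * t \<le> 40" "\<bar>T\<bar> \<le> c * t * ab" "ab \<ge> 0" "c \<ge> 0" "t \<ge> 0"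
  shows "\<bar>k * T\<bar> \<le> 40 * c * (ab::real)"
proof -
  have "\<bar>k * T\<bar> = \<bar>k\<bar> * \<bar>T\<bar>" by (simp add: abs_mult)
  also have "\<dots> \<le> \<bar>k\<bar> * (c * t * ab)" by (rule mult_left_mono[OF assms(2)]) simp
  also have "\<dots> = c * ab * (\<bar>k\<bar> * t)" by (simp add: mult_ac)
  also have "\<dots> \<le> c * ab * 40" by (rule mult_left_mono[OF assms(1)]) (use assms in simp)
  finally show ?thesis by (simp add: mult_ac)
qed


lemma prod_bd: "\<bar>x\<bar> \<le> p \<Longrightarrow> \<bar>y\<bar> \<le> q \<Longrightarrow> \<bar>x * y\<bar> \<le> p * (q::real)"
  unfolding abs_mult by (rule mult_mono) auto

theorem lemma5:
  "\<exists>C::real. \<forall>(n::nat) (A::nat \<Rightarrow> nat \<Rightarrow> real) (B::nat \<Rightarrow> nat \<Rightarrow> real).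
     n \<ge> 2 \<longrightarrow> sym_mat n A \<longrightarrow> sym_mat n B \<longrightarrow>
       measure_pmf.expectation (unif_perm n) (\<lambda>p. qform n A (svec n p))
         = mtrace n (mmult n (Sigma_mat n) A)
     \<and> \<bar>perm_cov n (\<lambda>p. qform n A (svec n p)) (\<lambda>p. qform n B (svec n p))
         - (2 * mtrace n (mmult n A B) - 6/5 * mtrace n (hadamard A B)
            - 4 / (5 * real n) * mtrace n A * mtrace n B)\<bar>
         \<le> C * spec_norm n A * spec_norm n B"
proof (intro exI[of _ "360::real"] allI impI conjI)
  fix n :: nat and A B :: "nat \<Rightarrow> nat \<Rightarrow> real"
  assume n: "n \<ge> 2" and sA: "sym_mat n A" and sB: "sym_mat n B"
  show "measure_pmf.expectation (unif_perm n) (\<lambda>p. qform n A (svec n p)) = mtrace n (mmult n (Sigma_mat n) A)"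
    using EA[OF n] Sigma_tr[OF n] by simp
  have n1: "n \<ge> 1" using n by simp
  define a where "a = spec_norm n A"
  define b where "b = spec_norm n B"
  have a0: "a \<ge> 0" and b0: "b \<ge> 0" unfolding a_def b_def using SN_nonneg[OF n1] by auto
  have ab0: "a * b \<ge> 0" using a0 b0 by simp
  let ?big = "pd n * osum n A * osum n B
   + (pc n - pd n) * (mtrace n A * osum n B + osum n A * mtrace n B + 4 * Uf n A B)
   + pbe n * (mtrace n A * mtrace n B + 2 * T5f n A B)
   + pga n * (2 * T6f n A B + 2 * T6f n B A) + pep n * T7f n A B"
  have EAB: "measure_pmf.expectation (unif_perm n) (\<lambda>p. qform n A (svec n p) * qform n B (svec n p)) = (rr n)^2 * ?big"
    unfolding unif_exp sumAB[OF n] Qc_FF[OF sA sB] using NN_pos[of n] by simp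
  have cov: "perm_cov n (\<lambda>p. qform n A (svec n p)) (\<lambda>p. qform n B (svec n p))
     = (rr n)^2 * ?big - ((real n * mtrace n A - osum n A) / (real n - 1)) * ((real n * mtrace n B - osum n B) / (real n - 1))"
    unfolding perm_cov_def EAB EA[OF n] ..
  have m5: "mtrace n (mmult n A B) = T5f n A B"
    unfolding mtrace_def mmult_def T5f_def using sB unfolding sym_mat_def by (intro sum.cong refl) auto
  have m7: "mtrace n (hadamard A B) = T7f n A B" unfolding mtrace_def hadamard_def T7f_def ..
  have id: "perm_cov n (\<lambda>p. qform n A (svec n p)) (\<lambda>p. qform n B (svec n p))
         - (2 * mtrace n (mmult n A B) - 6/5 * mtrace n (hadamard A B) - 4 / (5 * real n) * mtrace n A * mtrace n B)
     = kap1 n * (osum n A * osum n B) + kap2 n * (mtrace n A * osum n B + osum n A * mtrace n B) + kap3 n * Uf n A B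
       + kap4 n * (mtrace n A * mtrace n B) + kap5 n * T5f n A B + kap6 n * (T6f n A B + T6f n B A) + kap7 n * T7f n A B"
    unfolding cov m5 m7 by (rule cov_alg[OF n])
  have nn: "real n * real n = (real n)^2" by (simp add: power2_eq_square)
  have t1: "\<bar>osum n A * osum n B\<bar> \<le> 1 * (real n)^2 * (a * b)"
    using prod_bd[OF os_bd[OF n1] os_bd[OF n1]] unfolding a_def b_def by (simp add: power2_eq_square mult_ac)
  have t2: "\<bar>mtrace n A * osum n B + osum n A * mtrace n B\<bar> \<le> 2 * (real n)^2 * (a * b)"
  proof -
    have "\<bar>mtrace n A * osum n B\<bar> \<le> (real n)^2 * (a * b)"
      using prod_bd[OF tr_bd[OF n1] os_bd[OF n1]] unfolding a_def b_def by (simp add: power2_eq_square mult_ac)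
    moreover have "\<bar>osum n A * mtrace n B\<bar> \<le> (real n)^2 * (a * b)"
      using prod_bd[OF os_bd[OF n1] tr_bd[OF n1]] unfolding a_def b_def by (simp add: power2_eq_square mult_ac)
    ultimately show ?thesis by linarith
  qed
  have t3: "\<bar>Uf n A B\<bar> \<le> 1 * (real n)^1 * (a * b)" using U_bd[OF n1] unfolding a_def b_def by simp
  have t4: "\<bar>mtrace n A * mtrace n B\<bar> \<le> 1 * (real n)^2 * (a * b)"
    using prod_bd[OF tr_bd[OF n1] tr_bd[OF n1]] unfolding a_def b_def by (simp add: power2_eq_square mult_ac)
  have t5: "\<bar>T5f n A B\<bar> \<le> 1 * (real n)^1 * (a * b)" using T5_bd[OF n1] unfolding a_def b_def by simp
  have t6: "\<bar>T6f n A B + T6f n B A\<bar> \<le> 2 * (real n)^1 * (a * b)"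
    using T6_bd[OF n1, of A B] T6_bd[OF n1, of B A] unfolding a_def b_def by (simp add: mult_ac)
  have t7: "\<bar>T7f n A B\<bar> \<le> 1 * (real n)^1 * (a * b)" using T7_bd[OF n1] unfolding a_def b_def by simp
  have k1: "\<bar>kap1 n\<bar> * (real n)^2 \<le> 40" by (rule kap1_bd[OF n])
  have k2: "\<bar>kap2 n\<bar> * (real n)^2 \<le> 40" by (rule kap2_bd[OF n])
  have k3: "\<bar>kap3 n\<bar> * (real n)^1 \<le> 40" using kap3_bd[OF n] by simp
  have k4: "\<bar>kap4 n\<bar> * (real n)^2 \<le> 40" by (rule kap4_bd[OF n])
  have k5: "\<bar>kap5 n\<bar> * (real n)^1 \<le> 40" using kap5_bd[OF n] by simp
  have k6: "\<bar>kap6 n\<bar> * (real n)^1 \<le> 40" using kap6_bd[OF n] by simp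
  have k7: "\<bar>kap7 n\<bar> * (real n)^1 \<le> 40" using kap7_bd[OF n] by simp
  have c1: "\<bar>kap1 n * (osum n A * osum n B)\<bar> \<le> 40 * 1 * (a * b)" by (rule comb[OF k1 t1 ab0]) auto
  have c2: "\<bar>kap2 n * (mtrace n A * osum n B + osum n A * mtrace n B)\<bar> \<le> 40 * 2 * (a * b)" by (rule comb[OF k2 t2 ab0]) auto
  have c3: "\<bar>kap3 n * Uf n A B\<bar> \<le> 40 * 1 * (a * b)" by (rule comb[OF k3 t3 ab0]) auto
  have c4: "\<bar>kap4 n * (mtrace n A * mtrace n B)\<bar> \<le> 40 * 1 * (a * b)" by (rule comb[OF k4 t4 ab0]) auto
  have c5: "\<bar>kap5 n * T5f n A B\<bar> \<le> 40 * 1 * (a * b)" by (rule comb[OF k5 t5 ab0]) auto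
  have c6: "\<bar>kap6 n * (T6f n A B + T6f n B A)\<bar> \<le> 40 * 2 * (a * b)" by (rule comb[OF k6 t6 ab0]) auto
  have c7: "\<bar>kap7 n * T7f n A B\<bar> \<le> 40 * 1 * (a * b)" by (rule comb[OF k7 t7 ab0]) auto
  have "\<bar>kap1 n * (osum n A * osum n B) + kap2 n * (mtrace n A * osum n B + osum n A * mtrace n B) + kap3 n * Uf n A B
       + kap4 n * (mtrace n A * mtrace n B) + kap5 n * T5f n A B + kap6 n * (T6f n A B + T6f n B A) + kap7 n * T7f n A B\<bar>
      \<le> 360 * (a * b)"
    using c1 c2 c3 c4 c5 c6 c7 by linarith
  then show "\<bar>perm_cov n (\<lambda>p. qform n A (svec n p)) (\<lambda>p. qform n B (svec n p))
         - (2 * mtrace n (mmult n A B) - 6/5 * mtrace n (hadamard A B)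
            - 4 / (5 * real n) * mtrace n A * mtrace n B)\<bar>
         \<le> 360 * spec_norm n A * spec_norm n B"
    unfolding id a_def b_def by (simp add: mult_ac)
qed

end
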